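(* The space $\mathsf{scf}(\mathrm{UT}_\bullet)=\bigoplus_{n\ge0}\mathsf{scf}(\mathrm{UT}_n)$ is a sub-Hopf algebra of $\mathsf{cf}(\mathrm{UT}_\bullet)$ and is isomorphic to $\mathsf{IG}(q^{-1})$. In particular, for $\pi\in\mathcal{NO}_n$ and $\rho\in\mathcal{NO}_m$ with $n,m\ge0$, $$\mu(\overline{\delta}_\pi\otimes\overline{\delta}_\rho)=\overline{\delta}_{\pi\star_n\rho}\qquad\text{and}\qquad\Delta(\overline{\delta}_\pi)=\sum_{I\subseteq[n]}q^{-\mathrm{asc}_I(\pi)}\,\overline{\delta}_{\pi|^{sh}_I}\otimes\overline{\delta}_{\pi|^{sh}_{I^c}}.$$
   Context: Fix the finite field $\mathbb{F}_q$; $[n]=\{1,\dots,n\}$. $\mathrm{UT}_n$ is the group of $n\times n$ unipotent upper triangular matrices over $\mathbb{F}_q$. A natural unit interval order of $[n]$ is a partial order $\pi\subseteq[n]\times[n]$ with $(i,j)\in\pi\Rightarrow i\le j$ such that for every $(j,k)\in\pi$ with $j\ne k$, all $(i,l)$ with $i\le j$, $k\le l$ lie in $\pi$; $\mathcal{NO}_n$ is the set of these. For such $\pi$, $\mathrm{UT}(\pi)=\{g\in\mathrm{UT}_n:(g-1_n)_{i,j}\ne0\text{ only if }(i,j)\in\pi\}$, $\overline{\delta}_\pi$ is its indicator function, and $\mathsf{scf}(\mathrm{UT}_n)=\mathbb{C}\text{-span}\{\mathrm{Ind}^{\mathrm{UT}_n}_{\mathrm{UT}(\pi)}(\mathbb{1}):\pi\in\mathcal{NO}_n\}$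 ($\mathbb{1}$ the trivial character), which is also spanned by $\{\overline{\delta}_\pi:\pi\in\mathcal{NO}_n\}$. Hopf algebra $\mathsf{cf}(\mathrm{UT}_\bullet)=\bigoplus_n\mathsf{cf}(\mathrm{UT}_n)$ ($\mathsf{cf}$ = complex class functions): for $I\subseteq[n]$, $I^c=[n]\setminus I$, let $\mathrm{UL}_I=\{g\in\mathrm{UT}_n:(g-1_n)_{i,j}\ne0\text{ only if }(i,j)\in I\times I\cup I^c\times I^c\}$, $\mathrm{UR}_I=\{g:(g-1_n)_{i,j}\ne0\text{ only if }(i,j)\in I\times I^c\}$, $\mathrm{UP}_I=\{g:(g-1_n)_{i,j}=0\text{ for }(i,j)\in I^c\times I\}=\mathrm{UL}_I\ltimes\mathrm{UR}_I$ ($\mathrm{UP}_{[i]}=\mathrm{UT}_n$). With $\mathrm{cano}_I:I\to[|I|]$ order-preserving, $\mathrm{UL}_I\cong\mathrm{UT}_{|I|}\times\mathrm{UT}_{|I^c|}$ by relabelling blocks, inducing $\mathrm{st}_{(I,I^c)}$. Product $\mu=\bigoplus_{n\ge i\ge0}\mathrm{Inf}^{\mathrm{UT}_n}_{\mathrm{UL}_{[i]}}\circ\mathrm{st}^{-1}_{([i],[i]^c)}$ with $\mathrm{Inf}\psi(lr)=\psi(l)$; coproduct $\Delta=\bigoplus_n\sum_{I\subseteq[n]}\mathrm{st}_{(I,I^c)}\circ\mathrm{Def}^{\mathrm{UP}_I}_{\mathrm{UL}_I}\circ\mathrm{Res}^{\mathrm{UT}_n}_{\mathrm{UP}_I}$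 with $\mathrm{Def}\psi(g)=\frac1{|\mathrm{UR}_I|}\sum_{x\in\mathrm{UR}_I}\psi(gx)$. Shifted ordinal sum: $\pi\star_n\rho=\pi\sqcup\{(i+n,j+n):(i,j)\in\rho\}\sqcup([n]\times([n+m]\setminus[n]))$. For $I\subseteq[n]$: $\pi|^{sh}_I=\{(\mathrm{cano}_I(i),\mathrm{cano}_I(j)):(i,j)\in\pi,\ i,j\in I\}$ and $\mathrm{asc}_I(\pi)=|\{(i,j)\in I\times I^c:i<j,(i,j)\notin\pi\}|$. $\mathsf{IG}(q^{-1})$ is the $\mathbb{C}$-Hopf algebra with basis $\{\mathrm{inc}(\pi):\pi\in\mathcal{NO}_n,n\ge0\}$, product $\mathrm{inc}(\pi)\otimes\mathrm{inc}(\rho)\mapsto\mathrm{inc}(\pi\star_n\rho)$ and coproduct $\mathrm{inc}(\pi)\mapsto\sum_{I\subseteq[n]}q^{-\mathrm{asc}_I(\pi)}\mathrm{inc}(\pi|^{sh}_I)\otimes\mathrm{inc}(\pi|^{sh}_{I^c})$. *)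

theory Defs
  imports Complex_Main
begin

text \<open>An n x n matrix has entries indexed by [n] = {1..n} and is 0 outside [n] x [n].
  The field F_q is a type 'a of class {finite, field}; q = CARD('a).\<close>

type_synonym 'a mat = "nat \<Rightarrow> nat \<Rightarrow> 'a"

definition idm :: "nat \<Rightarrow> 'a::field mat" where
  "idm n = (\<lambda>i j. if i = j \<and> i \<in> {1..n} then 1 else 0)"

definition mmult :: "nat \<Rightarrow> 'a::field mat \<Rightarrow> 'a mat \<Rightarrow> 'a mat" where
  "mmult n g h = (\<lambda>i j. if i \<in> {1..n} \<and> j \<in> {1..n} then (\<Sum>k\<in>{1..n}. g i k * h k j) else 0)"

definition UT :: "nat \<Rightarrow> 'a::field mat set" where
  "UT n = {g. (\<forall>i j. (i \<notin> {1..n} \<or> j \<notin> {1..n}) \<longrightarrow> g i j = 0)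
              \<and> (\<forall>i\<in>{1..n}. g i i = 1) \<and> (\<forall>i j. j < i \<longrightarrow> g i j = 0)}"

definition NO :: "nat \<Rightarrow> (nat \<times> nat) set set" where
  "NO n = {\<pi>. \<pi> \<subseteq> {1..n} \<times> {1..n}
             \<and> (\<forall>i\<in>{1..n}. (i, i) \<in> \<pi>) \<and> antisym \<pi> \<and> trans \<pi>
             \<and> (\<forall>(i, j)\<in>\<pi>. i \<le> j)
             \<and> (\<forall>(j, k)\<in>\<pi>. j \<noteq> k \<longrightarrow>
                   (\<forall>i\<in>{1..n}. \<forall>l\<in>{1..n}. i \<le> j \<and> k \<le> l \<longrightarrow> (i, l) \<in> \<pi>))}"

definition UTpat :: "nat \<Rightarrow> (nat \<times> nat) set \<Rightarrow> 'a::field mat set" where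
  "UTpat n \<pi> = {g \<in> UT n. \<forall>i j. g i j - idm n i j \<noteq> 0 \<longrightarrow> (i, j) \<in> \<pi>}"

definition delta :: "nat \<Rightarrow> (nat \<times> nat) set \<Rightarrow> 'a::field mat \<Rightarrow> complex" where
  "delta n \<pi> = (\<lambda>g. if g \<in> UTpat n \<pi> then 1 else 0)"

definition cspan :: "('b \<Rightarrow> complex) set \<Rightarrow> ('b \<Rightarrow> complex) set" where
  "cspan X = {(\<lambda>x. \<Sum>s\<in>S. c s * s x) | S c. finite S \<and> S \<subseteq> X}"

definition cf :: "nat \<Rightarrow> ('a::field mat \<Rightarrow> complex) set" where
  "cf n = {f. (\<forall>g. g \<notin> UT n \<longrightarrow> f g = 0)
            \<and> (\<forall>g\<in>UT n. \<forall>h\<in>UT n. \<forall>x\<in>UT n. mmult n g x = mmult n x h \<longrightarrow> f g = f h)}"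

text \<open>Ind_H^{UT_n}(1)(g) = (1/|H|) * #{x in UT_n. x^-1 g x in H}; x^-1 g x = h iff g x = x h.\<close>
definition IndTriv :: "nat \<Rightarrow> 'a::field mat set \<Rightarrow> 'a mat \<Rightarrow> complex" where
  "IndTriv n H = (\<lambda>g. if g \<in> UT n
       then of_nat (card {x \<in> UT n. \<exists>h\<in>H. mmult n g x = mmult n x h}) / of_nat (card H)
       else 0)"

definition scf :: "nat \<Rightarrow> ('a::field mat \<Rightarrow> complex) set" where
  "scf n = cspan {IndTriv n (UTpat n \<pi>) | \<pi>. \<pi> \<in> NO n}"

definition cano :: "nat set \<Rightarrow> nat \<Rightarrow> nat" where
  "cano I i = card {k \<in> I. k \<le> i}"

definition decano :: "nat set \<Rightarrow> nat \<Rightarrow> nat" where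
  "decano I = the_inv_into I (cano I)"

definition sub :: "nat set \<Rightarrow> 'a::field mat \<Rightarrow> 'a mat" where
  "sub I g = (\<lambda>i j. if i \<in> {1..card I} \<and> j \<in> {1..card I} then g (decano I i) (decano I j) else 0)"

text \<open>Inverse of UL_I ~ UT_|I| x UT_|I^c|: glue two matrices into block form.\<close>
definition glue :: "nat \<Rightarrow> nat set \<Rightarrow> 'a::field mat \<Rightarrow> 'a mat \<Rightarrow> 'a mat" where
  "glue n I a b = (\<lambda>i j. if i \<in> I \<and> j \<in> I then a (cano I i) (cano I j)
       else if i \<in> {1..n} - I \<and> j \<in> {1..n} - I
         then b (cano ({1..n} - I) i) (cano ({1..n} - I) j) else 0)"

definition UL :: "nat \<Rightarrow> nat set \<Rightarrow> 'a::field mat set" where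
  "UL n I = {g \<in> UT n. \<forall>i j. g i j - idm n i j \<noteq> 0 \<longrightarrow>
                (i, j) \<in> I \<times> I \<union> ({1..n} - I) \<times> ({1..n} - I)}"

definition UR :: "nat \<Rightarrow> nat set \<Rightarrow> 'a::field mat set" where
  "UR n I = {g \<in> UT n. \<forall>i j. g i j - idm n i j \<noteq> 0 \<longrightarrow> (i, j) \<in> I \<times> ({1..n} - I)}"

definition UP :: "nat \<Rightarrow> nat set \<Rightarrow> 'a::field mat set" where
  "UP n I = {g \<in> UT n. \<forall>(i, j) \<in> ({1..n} - I) \<times> I. g i j - idm n i j = 0}"

text \<open>Inflation from UL_I to UT_n (used with I = [i] so that UP_I = UT_n): Inf psi (l r) = psi l.\<close>
definition Infl :: "nat \<Rightarrow> nat set \<Rightarrow> ('a::field mat \<Rightarrow> complex) \<Rightarrow> 'a mat \<Rightarrow> complex" where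
  "Infl n I \<psi> = (\<lambda>g. if g \<in> UT n
       then \<psi> (THE l. l \<in> UL n I \<and> (\<exists>r\<in>UR n I. g = mmult n l r)) else 0)"

text \<open>Product mu : cf(UT_n) (x) cf(UT_m) -> cf(UT_{n+m}), Inf o st^{-1}.\<close>
definition mu :: "nat \<Rightarrow> nat \<Rightarrow> ('a::field mat \<Rightarrow> complex) \<Rightarrow> ('a mat \<Rightarrow> complex) \<Rightarrow> 'a mat \<Rightarrow> complex" where
  "mu n m \<psi> \<phi> = Infl (n + m) {1..n}
       (\<lambda>l. \<psi> (sub {1..n} l) * \<phi> (sub ({1..n+m} - {1..n}) l))"

definition Res :: "nat \<Rightarrow> nat set \<Rightarrow> ('a::field mat \<Rightarrow> complex) \<Rightarrow> 'a mat \<Rightarrow> complex" where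
  "Res n I \<psi> = (\<lambda>g. if g \<in> UP n I then \<psi> g else 0)"

definition Defl :: "nat \<Rightarrow> nat set \<Rightarrow> ('a::field mat \<Rightarrow> complex) \<Rightarrow> 'a mat \<Rightarrow> complex" where
  "Defl n I \<psi> = (\<lambda>g. (\<Sum>x\<in>UR n I. \<psi> (mmult n g x)) / of_nat (card (UR n I :: 'a mat set)))"

text \<open>The tensor product cf(UT_k) (x) cf(UT_l) is identified with functions on
  pairs of matrices (u (x) v = (a,b) |-> u a * v b); the degree-n part of
  cf(UT) (x) cf(UT) is the space of functions on pairs supported on the union over k of UT_k x UT_(n-k).\<close>
definition Delta :: "nat \<Rightarrow> ('a::field mat \<Rightarrow> complex) \<Rightarrow> 'a mat \<times> 'a mat \<Rightarrow> complex" where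
  "Delta n \<psi> = (\<lambda>(a, b). \<Sum>I\<in>Pow {1..n}.
       if a \<in> UT (card I) \<and> b \<in> UT (n - card I)
       then Defl n I (Res n I \<psi>) (glue n I a b) else 0)"

definition tens :: "('b \<Rightarrow> complex) \<Rightarrow> ('c \<Rightarrow> complex) \<Rightarrow> 'b \<times> 'c \<Rightarrow> complex" where
  "tens u v = (\<lambda>(a, b). u a * v b)"

definition ostar :: "nat \<Rightarrow> nat \<Rightarrow> (nat \<times> nat) set \<Rightarrow> (nat \<times> nat) set \<Rightarrow> (nat \<times> nat) set" where
  "ostar n m \<pi> \<rho> = \<pi> \<union> {(i + n, j + n) | i j. (i, j) \<in> \<rho>} \<union> ({1..n} \<times> ({1..n+m} - {1..n}))"

definition shres :: "nat set \<Rightarrow> (nat \<times> nat) set \<Rightarrow> (nat \<times> nat) set" where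
  "shres I \<pi> = {(cano I i, cano I j) | i j. (i, j) \<in> \<pi> \<and> i \<in> I \<and> j \<in> I}"

definition asc :: "nat \<Rightarrow> nat set \<Rightarrow> (nat \<times> nat) set \<Rightarrow> nat" where
  "asc n I \<pi> = card {(i, j) \<in> I \<times> ({1..n} - I). i < j \<and> (i, j) \<notin> \<pi>}"

end

theory Submission
  imports Defs "HOL-Library.FuncSet"
begin

definition spt :: "'a::zero mat \<Rightarrow> (nat \<times> nat) set \<Rightarrow> bool" where
  "spt X T \<longleftrightarrow> (\<forall>i j. X i j \<noteq> 0 \<longrightarrow> (i, j) \<in> T)"

definition MS :: "(nat \<times> nat) set \<Rightarrow> 'a::zero mat set" where
  "MS T = {X. spt X T}"

lemma bij_MS:
  "bij_betw (\<lambda>X p. if p \<in> T then X (fst p) (snd p) else undefined) (MS T :: 'a::zero mat set) (T \<rightarrow>\<^sub>E UNIV)"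
proof (rule bij_betw_byWitness[where f'="\<lambda>f i j. if (i, j) \<in> T then f (i, j) else 0"])
  show "\<forall>a\<in>(MS T :: 'a mat set). (\<lambda>f i j. if (i, j) \<in> T then f (i, j) else 0)
     ((\<lambda>X p. if p \<in> T then X (fst p) (snd p) else undefined) a) = a"
    by (auto simp: MS_def spt_def fun_eq_iff)
  show "\<forall>a'\<in>T \<rightarrow>\<^sub>E (UNIV :: 'a set). (\<lambda>X p. if p \<in> T then X (fst p) (snd p) else undefined)
     ((\<lambda>f i j. if (i, j) \<in> T then f (i, j) else 0) a') = a'"
    by (auto simp: fun_eq_iff PiE_def extensional_def)
qed (auto simp: MS_def spt_def)

lemma card_MS: "finite T \<Longrightarrow> card (MS T :: 'a::{finite,zero} mat set) = card (UNIV :: 'a set) ^ card T"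
  using bij_betw_same_card[OF bij_MS[of T]] by (simp add: card_PiE)

lemma finite_MS: "finite T \<Longrightarrow> finite (MS T :: 'a::{finite,zero} mat set)"
  using bij_betw_finite[OF bij_MS[of T]] by (auto intro!: finite_PiE)


definition SU :: "nat \<Rightarrow> (nat \<times> nat) set" where
  "SU n = {(i, j). i \<in> {1..n} \<and> j \<in> {1..n} \<and> i < j}"

definition msub :: "'a::field mat \<Rightarrow> 'a mat \<Rightarrow> 'a mat" where
  "msub g h = (\<lambda>i j. g i j - h i j)"

lemma UT_out: "g \<in> UT n \<Longrightarrow> i \<notin> {1..n} \<or> j \<notin> {1..n} \<Longrightarrow> g i j = 0"
  by (auto simp: UT_def)
lemma UT_diag: "g \<in> UT n \<Longrightarrow> i \<in> {1..n} \<Longrightarrow> g i i = 1"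
  by (auto simp: UT_def)
lemma UT_low: "g \<in> UT n \<Longrightarrow> j < i \<Longrightarrow> g i j = 0"
  by (auto simp: UT_def)
lemma UT_nz: "g \<in> UT n \<Longrightarrow> g i j \<noteq> 0 \<Longrightarrow> i \<in> {1..n} \<and> j \<in> {1..n} \<and> i \<le> j"
  using UT_out UT_low by (metis not_le)

lemma idm_UT: "idm n \<in> UT n"
  by (auto simp: UT_def idm_def)

lemma UT_spt: "g \<in> UT n \<Longrightarrow> spt g ({1..n} \<times> {1..n})"
  by (auto simp: spt_def dest: UT_nz)

lemma UT_msub: "g \<in> UT n \<Longrightarrow> spt (msub g (idm n)) (SU n)"
  unfolding spt_def SU_def msub_def
  by (smt (verit, best) UT_def UT_nz atLeastAtMost_iff case_prodI diff_self idm_def le_neq_implies_less mem_Collect_eq)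

lemma msub_UT: assumes "spt X (SU n)" shows "(\<lambda>i j. idm n i j + X i j) \<in> UT n"
proof -
  have X: "X i j \<noteq> 0 \<Longrightarrow> i \<in> {1..n} \<and> j \<in> {1..n} \<and> i < j" for i j
    using assms unfolding spt_def SU_def by auto
  show ?thesis unfolding UT_def idm_def
  proof (intro CollectI conjI allI impI ballI)
    fix i j assume "i \<notin> {1..n} \<or> j \<notin> {1..n}"
    then show "(if i = j \<and> i \<in> {1..n} then 1 else 0) + X i j = 0" using X by fastforce
  next
    fix i assume "i \<in> {1..n}" then show "(if i = i \<and> i \<in> {1..n} then 1 else 0) + X i i = 1"
      using X[of i i] by fastforce
  next
    fix i j :: nat assume "j < i" then show "(if i = j \<and> i \<in> {1..n} then 1 else 0) + X i j = 0"
      using X[of i j] by fastforce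
  qed
qed

lemma mmult_UT:
  assumes g: "g \<in> UT n" and h: "h \<in> UT n"
  shows "mmult n g h \<in> UT n"
proof -
  have d: "(\<Sum>k\<in>{1..n}. g i k * h k i) = 1" if i: "i \<in> {1..n}" for i
  proof -
    have "(\<Sum>k\<in>{1..n}. g i k * h k i) = (\<Sum>k\<in>{1..n}. if k = i then 1 else 0)"
    proof (rule sum.cong)
      fix k assume "k \<in> {1..n}"
      show "g i k * h k i = (if k = i then 1 else 0)"
      proof (cases "k = i")
        case True then show ?thesis using g h i by (simp add: UT_diag)
      next
        case False
        then have "k < i \<or> i < k" by auto
        then show ?thesis using False g h by (auto simp: UT_low)
      qed
    qed simp
    also have "\<dots> = 1" using i by simp
    finally show ?thesis .
  qed
  have l: "(\<Sum>k\<in>{1..n}. g i k * h k j) = 0" if "j < i" for i j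
    by (rule sum.neutral) (metis UT_low g h mult_eq_0_iff not_le order.strict_trans1 that)
  show ?thesis unfolding UT_def mmult_def using d l by auto
qed

lemma mmult_idm_left: assumes "spt x ({1..n} \<times> {1..n})" shows "mmult n (idm n) x = x"
proof -
  have "(\<Sum>k\<in>{1..n}. idm n i k * x k j) = x i j" if "i \<in> {1..n}" for i j
  proof -
    have "(\<Sum>k\<in>{1..n}. idm n i k * x k j) = (\<Sum>k\<in>{1..n}. if i = k then x k j else 0)"
      by (rule sum.cong) (auto simp: idm_def that)
    also have "\<dots> = x i j" using that by simp
    finally show ?thesis .
  qed
  moreover have "x i j = 0" if "\<not> (i \<in> {1..n} \<and> j \<in> {1..n})" for i j
    using assms that unfolding spt_def by blast
  ultimately show ?thesis unfolding mmult_def fun_eq_iff by auto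
qed

lemma mmult_idm_right: assumes "spt x ({1..n} \<times> {1..n})" shows "mmult n x (idm n) = x"
proof -
  have "(\<Sum>k\<in>{1..n}. x i k * idm n k j) = x i j" if "j \<in> {1..n}" for i j
  proof -
    have "(\<Sum>k\<in>{1..n}. x i k * idm n k j) = (\<Sum>k\<in>{1..n}. if j = k then x i k else 0)"
      by (rule sum.cong) (auto simp: idm_def that)
    also have "\<dots> = x i j" using that by simp
    finally show ?thesis .
  qed
  moreover have "x i j = 0" if "\<not> (i \<in> {1..n} \<and> j \<in> {1..n})" for i j
    using assms that unfolding spt_def by blast
  ultimately show ?thesis unfolding mmult_def fun_eq_iff by auto
qed

lemma mmult_msub_left: "mmult n (msub g h) x = msub (mmult n g x) (mmult n h x)"
  unfolding mmult_def msub_def fun_eq_iff by (auto simp: left_diff_distrib sum_subtractf)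

lemma mmult_msub_right: "mmult n x (msub g h) = msub (mmult n x g) (mmult n x h)"
  unfolding mmult_def msub_def fun_eq_iff by (auto simp: right_diff_distrib sum_subtractf)

lemma left_supp:
  assumes x: "x \<in> UT n" and D: "spt D (SU n)" and M: "spt (mmult n x D) P"
  and ideal: "\<And>i k j. i \<in> {1..n} \<Longrightarrow> i \<le> k \<Longrightarrow> (k,j) \<in> P \<Longrightarrow> k < j \<Longrightarrow> (i,j) \<in> P"
  shows "spt D P"
proof -
  have "D i j \<noteq> 0 \<longrightarrow> (i,j) \<in> P" for i j
  proof (induction i rule: measure_induct_rule[where f="\<lambda>i. n - i"])
    case (less i)
    show ?case
    proof (intro impI, rule ccontr)
      assume nz: "D i j \<noteq> 0" and nP: "(i,j) \<notin> P"
      from nz D have ij: "i \<in> {1..n}" "j \<in> {1..n}" "i < j" by (auto simp: spt_def SU_def)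
      have rest: "(\<Sum>k\<in>{1..n}-{i}. x i k * D k j) = 0"
      proof (rule sum.neutral, rule ballI)
        fix k assume k: "k \<in> {1..n}-{i}"
        show "x i k * D k j = 0"
        proof (cases "k < i")
          case True then show ?thesis using x by (simp add: UT_low)
        next
          case False
          with k have ik: "i < k" "k \<le> n" by auto
          hence lt: "n - k < n - i" by auto
          have "D k j = 0"
          proof (rule ccontr)
            assume dk: "D k j \<noteq> 0"
            with less[OF lt] have "(k,j) \<in> P" by blast
            moreover from dk D have "k < j" by (auto simp: spt_def SU_def)
            ultimately have "(i,j) \<in> P" using ideal[of i k j] ij ik by auto
            with nP show False by blast
          qed
          then show ?thesis by simp
        qed
      qed
      have "mmult n x D i j = (\<Sum>k\<in>{1..n}. x i k * D k j)" using ij by (simp add: mmult_def)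
      also have "\<dots> = x i i * D i j + (\<Sum>k\<in>{1..n}-{i}. x i k * D k j)" by (rule sum.remove) (use ij in auto)
      also have "\<dots> = D i j" using rest x ij by (simp add: UT_diag)
      finally have "mmult n x D i j \<noteq> 0" using nz by simp
      with M have "(i,j) \<in> P" by (auto simp: spt_def)
      with nP show False by blast
    qed
  qed
  then show ?thesis by (auto simp: spt_def)
qed

lemma right_supp:
  assumes x: "x \<in> UT n" and D: "spt D (SU n)" and M: "spt (mmult n D x) P"
  and ideal: "\<And>i k j. (i,k) \<in> P \<Longrightarrow> i < k \<Longrightarrow> k \<le> j \<Longrightarrow> j \<in> {1..n} \<Longrightarrow> (i,j) \<in> P"
  shows "spt D P"
proof -
  have "D i j \<noteq> 0 \<longrightarrow> (i,j) \<in> P" for i j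
  proof (induction j rule: less_induct)
    case (less j)
    show ?case
    proof (intro impI, rule ccontr)
      assume nz: "D i j \<noteq> 0" and nP: "(i,j) \<notin> P"
      from nz D have ij: "i \<in> {1..n}" "j \<in> {1..n}" "i < j" by (auto simp: spt_def SU_def)
      have rest: "(\<Sum>k\<in>{1..n}-{j}. D i k * x k j) = 0"
      proof (rule sum.neutral, rule ballI)
        fix k assume k: "k \<in> {1..n}-{j}"
        show "D i k * x k j = 0"
        proof (cases "j < k")
          case True then show ?thesis using x by (simp add: UT_low)
        next
          case False
          with k have kj: "k < j" by auto
          have "D i k = 0"
          proof (rule ccontr)
            assume dk: "D i k \<noteq> 0"
            with less[OF kj] have "(i,k) \<in> P" by blast
            moreover from dk D have "i < k" by (auto simp: spt_def SU_def)
            ultimately have "(i,j) \<in> P" using ideal[of i k j] ij kj by auto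
            with nP show False by blast
          qed
          then show ?thesis by simp
        qed
      qed
      have "mmult n D x i j = (\<Sum>k\<in>{1..n}. D i k * x k j)" using ij by (simp add: mmult_def)
      also have "\<dots> = D i j * x j j + (\<Sum>k\<in>{1..n}-{j}. D i k * x k j)" by (rule sum.remove) (use ij in auto)
      also have "\<dots> = D i j" using rest x ij by (simp add: UT_diag)
      finally have "mmult n D x i j \<noteq> 0" using nz by simp
      with M have "(i,j) \<in> P" by (auto simp: spt_def)
      with nP show False by blast
    qed
  qed
  then show ?thesis by (auto simp: spt_def)
qed

lemma fwd_left:
  assumes x: "x \<in> UT n" and D: "spt D (SU n)" and DP: "spt D P"
  and ideal: "\<And>i k j. i \<in> {1..n} \<Longrightarrow> i \<le> k \<Longrightarrow> (k,j) \<in> P \<Longrightarrow> k < j \<Longrightarrow> (i,j) \<in> P"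
  shows "spt (mmult n x D) P"
  unfolding spt_def
proof (intro allI impI)
  fix i j assume nz: "mmult n x D i j \<noteq> 0"
  then have ij: "i \<in> {1..n}" "j \<in> {1..n}" and s: "(\<Sum>k\<in>{1..n}. x i k * D k j) \<noteq> 0"
    by (auto simp: mmult_def split: if_splits)
  from s obtain k where k: "k \<in> {1..n}" "x i k * D k j \<noteq> 0"
    by (meson sum.neutral)
  then have "x i k \<noteq> 0" "D k j \<noteq> 0" by auto
  then have "i \<le> k" "(k,j) \<in> P" "k < j" using D DP UT_nz[OF x, of i k] by (auto simp: spt_def SU_def)
  then show "(i,j) \<in> P" using ideal ij by blast
qed

lemma fwd_right:
  assumes x: "x \<in> UT n" and D: "spt D (SU n)" and DP: "spt D P"
  and ideal: "\<And>i k j. (i,k) \<in> P \<Longrightarrow> i < k \<Longrightarrow> k \<le> j \<Longrightarrow> j \<in> {1..n} \<Longrightarrow> (i,j) \<in> P"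
  shows "spt (mmult n D x) P"
  unfolding spt_def
proof (intro allI impI)
  fix i j assume nz: "mmult n D x i j \<noteq> 0"
  then have ij: "i \<in> {1..n}" "j \<in> {1..n}" and s: "(\<Sum>k\<in>{1..n}. D i k * x k j) \<noteq> 0"
    by (auto simp: mmult_def split: if_splits)
  from s obtain k where k: "k \<in> {1..n}" "D i k * x k j \<noteq> 0"
    by (meson sum.neutral)
  then have "x k j \<noteq> 0" "D i k \<noteq> 0" by auto
  then have "k \<le> j" "(i,k) \<in> P" "i < k" using D DP UT_nz[OF x, of k j] by (auto simp: spt_def SU_def)
  then show "(i,j) \<in> P" using ideal ij by blast
qed

lemma mult_inj:
  assumes x: "x \<in> UT n" and D: "spt D ({1..n}\<times>{1..n})" and E: "spt E ({1..n}\<times>{1..n})"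
    and eq: "mmult n x D = mmult n x E"
  shows "D = E"
proof -
  define F where "F = msub D E"
  have F0: "mmult n x F = (\<lambda>i j. 0)" unfolding F_def mmult_msub_right eq by (simp add: msub_def)
  have "F i j = 0" for i j
  proof (induction i rule: measure_induct_rule[where f="\<lambda>i. n - i"])
    case (less i)
    show ?case
    proof (rule ccontr)
      assume nz: "F i j \<noteq> 0"
      have "D i j \<noteq> 0 \<or> E i j \<noteq> 0" using nz by (auto simp: F_def msub_def)
      then have ij: "i \<in> {1..n}" "j \<in> {1..n}" using D E unfolding spt_def by blast+
      have rest: "(\<Sum>k\<in>{1..n}-{i}. x i k * F k j) = 0"
      proof (rule sum.neutral, rule ballI)
        fix k assume k: "k \<in> {1..n}-{i}"
        show "x i k * F k j = 0"
        proof (cases "k < i")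
          case True then show ?thesis using x by (simp add: UT_low)
        next
          case False
          with k have "n - k < n - i" by auto
          then show ?thesis using less by simp
        qed
      qed
      have "mmult n x F i j = (\<Sum>k\<in>{1..n}. x i k * F k j)" using ij by (simp add: mmult_def)
      also have "\<dots> = x i i * F i j + (\<Sum>k\<in>{1..n}-{i}. x i k * F k j)" by (rule sum.remove) (use ij in auto)
      also have "\<dots> = F i j" using rest x ij by (simp add: UT_diag)
      finally show False using nz F0 by (simp add: fun_eq_iff)
    qed
  qed
  then show ?thesis by (simp add: F_def msub_def fun_eq_iff)
qed

lemma mult_surj:
  assumes x: "x \<in> UT n" and S: "finite S" "S \<subseteq> MS ({1..n}\<times>{1..n})"
    and cl: "\<And>X. X \<in> S \<Longrightarrow> mmult n x X \<in> S" and Y: "Y \<in> S"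
  shows "\<exists>X\<in>S. mmult n x X = Y"
proof -
  have "inj_on (mmult n x) S"
    using mult_inj[OF x] S(2) unfolding inj_on_def MS_def by blast
  then have "mmult n x ` S = S" using endo_inj_surj[OF S(1)] cl by blast
  with Y show ?thesis by (metis imageE)
qed

lemma NO_iff: "\<pi> \<in> NO n \<longleftrightarrow> \<pi> \<subseteq> {1..n} \<times> {1..n}
             \<and> (\<forall>i\<in>{1..n}. (i, i) \<in> \<pi>) \<and> antisym \<pi> \<and> trans \<pi>
             \<and> (\<forall>(i, j)\<in>\<pi>. i \<le> j)
             \<and> (\<forall>(j, k)\<in>\<pi>. j \<noteq> k \<longrightarrow>
                   (\<forall>i\<in>{1..n}. \<forall>l\<in>{1..n}. i \<le> j \<and> k \<le> l \<longrightarrow> (i, l) \<in> \<pi>))"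
  unfolding NO_def by (rule mem_Collect_eq)

lemma NO_sub: "\<pi> \<in> NO n \<Longrightarrow> (i,j) \<in> \<pi> \<Longrightarrow> i \<in> {1..n} \<and> j \<in> {1..n}"
  unfolding NO_iff by (meson SigmaD1 SigmaD2 subsetD)

lemma NO_le: "\<pi> \<in> NO n \<Longrightarrow> (i,j) \<in> \<pi> \<Longrightarrow> i \<le> j"
  unfolding NO_iff by (metis (no_types, lifting) case_prodD)

lemma NO_refl: "\<pi> \<in> NO n \<Longrightarrow> i \<in> {1..n} \<Longrightarrow> (i,i) \<in> \<pi>"
  unfolding NO_iff by metis

lemma NO_ideal: "\<pi> \<in> NO n \<Longrightarrow> (j,k) \<in> \<pi> \<Longrightarrow> j \<noteq> k \<Longrightarrow> i \<in> {1..n} \<Longrightarrow> l \<in> {1..n} \<Longrightarrow> i \<le> j \<Longrightarrow> k \<le> l \<Longrightarrow> (i,l) \<in> \<pi>"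
proof -
  assume a: "\<pi> \<in> NO n" "(j,k) \<in> \<pi>" "j \<noteq> k" "i \<in> {1..n}" "l \<in> {1..n}" "i \<le> j" "k \<le> l"
  from a(1) have H: "\<forall>(j, k)\<in>\<pi>. j \<noteq> k \<longrightarrow>
                   (\<forall>i\<in>{1..n}. \<forall>l\<in>{1..n}. i \<le> j \<and> k \<le> l \<longrightarrow> (i, l) \<in> \<pi>)"
    unfolding NO_iff by (elim conjE)
  have "j \<noteq> k \<longrightarrow> (\<forall>i\<in>{1..n}. \<forall>l\<in>{1..n}. i \<le> j \<and> k \<le> l \<longrightarrow> (i, l) \<in> \<pi>)"
    using bspec[OF H a(2)] by simp
  then show ?thesis using a(3-7) by simp
qed

lemma NO_idealL: "\<pi> \<in> NO n \<Longrightarrow> i \<in> {1..n} \<Longrightarrow> i \<le> k \<Longrightarrow> (k,j) \<in> \<pi> \<Longrightarrow> k < j \<Longrightarrow> (i,j) \<in> \<pi>"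
  by (rule NO_ideal[of \<pi> n k j]) (auto dest: NO_sub)

lemma NO_idealR: "\<pi> \<in> NO n \<Longrightarrow> (i,k) \<in> \<pi> \<Longrightarrow> i < k \<Longrightarrow> k \<le> j \<Longrightarrow> j \<in> {1..n} \<Longrightarrow> (i,j) \<in> \<pi>"
  by (rule NO_ideal[of \<pi> n i k]) (auto dest: NO_sub)

lemma UTpat_iff: "g \<in> UTpat n \<pi> \<longleftrightarrow> g \<in> UT n \<and> spt (msub g (idm n)) \<pi>"
  by (auto simp: UTpat_def spt_def msub_def)

lemma UTpat_UT: "g \<in> UTpat n \<pi> \<Longrightarrow> g \<in> UT n"
  by (auto simp: UTpat_def)

lemma finite_UT: "finite (UT n :: 'a::{finite,field} mat set)"
proof -
  have "UT n \<subseteq> (MS ({1..n}\<times>{1..n}) :: 'a mat set)"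
    using UT_spt by (auto simp: MS_def)
  then show ?thesis using finite_MS[of "{1..n}\<times>{1..n}"] finite_subset by auto
qed

lemma idm_UTpat: "\<pi> \<in> NO n \<Longrightarrow> idm n \<in> UTpat n \<pi>"
  by (simp add: UTpat_def idm_UT)

lemma msub_mult_left: "x \<in> UT n \<Longrightarrow> mmult n (msub g (idm n)) x = msub (mmult n g x) x"
  by (simp add: mmult_msub_left mmult_idm_left[OF UT_spt])

lemma msub_mult_right: "x \<in> UT n \<Longrightarrow> mmult n x (msub h (idm n)) = msub (mmult n x h) x"
  by (simp add: mmult_msub_right mmult_idm_right[OF UT_spt])

lemma conj_pat:
  assumes pi: "\<pi> \<in> NO n" and g: "g \<in> UT n" and x: "x \<in> UT n" and h: "h \<in> UT n"
    and eq: "mmult n g x = mmult n x h"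
  shows "g \<in> UTpat n \<pi> \<longleftrightarrow> h \<in> UTpat n \<pi>"
proof -
  define A where "A = msub g (idm n)"
  define D where "D = msub h (idm n)"
  have AD: "mmult n A x = mmult n x D"
    unfolding A_def D_def msub_mult_left[OF x] msub_mult_right[OF x] eq ..
  have A: "spt A (SU n)" and D: "spt D (SU n)" using UT_msub g h A_def D_def by auto
  have iL: "\<And>i k j. i \<in> {1..n} \<Longrightarrow> i \<le> k \<Longrightarrow> (k,j) \<in> \<pi> \<Longrightarrow> k < j \<Longrightarrow> (i,j) \<in> \<pi>"
    using NO_idealL[OF pi] by blast
  have iR: "\<And>i k j. (i,k) \<in> \<pi> \<Longrightarrow> i < k \<Longrightarrow> k \<le> j \<Longrightarrow> j \<in> {1..n} \<Longrightarrow> (i,j) \<in> \<pi>"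
    using NO_idealR[OF pi] by blast
  show ?thesis
  proof
    assume "g \<in> UTpat n \<pi>"
    then have sA: "spt A \<pi>" by (simp add: UTpat_iff A_def)
    have "spt (mmult n A x) \<pi>" by (rule fwd_right[OF x A sA iR])
    then have "spt (mmult n x D) \<pi>" using AD by simp
    then have "spt D \<pi>" by (rule left_supp[OF x D _ iL])
    then show "h \<in> UTpat n \<pi>" using h by (simp add: UTpat_iff D_def)
  next
    assume "h \<in> UTpat n \<pi>"
    then have sD: "spt D \<pi>" by (simp add: UTpat_iff D_def)
    have "spt (mmult n x D) \<pi>" by (rule fwd_left[OF x D sD iL])
    then have "spt (mmult n A x) \<pi>" using AD by simp
    then have "spt A \<pi>" by (rule right_supp[OF x A _ iR])
    then show "g \<in> UTpat n \<pi>" using g by (simp add: UTpat_iff A_def)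
  qed
qed

lemma SU_idealL: "i \<in> {1..n} \<Longrightarrow> i \<le> k \<Longrightarrow> (k,j) \<in> SU n \<Longrightarrow> k < j \<Longrightarrow> (i,j) \<in> SU n"
  by (auto simp: SU_def)
lemma SU_idealR: "(i,k) \<in> SU n \<Longrightarrow> i < k \<Longrightarrow> k \<le> j \<Longrightarrow> j \<in> {1..n} \<Longrightarrow> (i,j) \<in> SU n"
  by (auto simp: SU_def)

lemma SU_sub: "SU n \<subseteq> {1..n}\<times>{1..n}" by (auto simp: SU_def)
lemma finite_SU: "finite (SU n)" using SU_sub finite_subset by blast

lemma msub_idm_add: "msub (\<lambda>i j. idm n i j + D i j) (idm n) = D"
  by (simp add: msub_def)

lemma conj_exists:
  fixes g x :: "'a::{finite,field} mat"
  assumes g: "g \<in> UT n" and x: "x \<in> UT n"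
  shows "\<exists>h \<in> UT n. mmult n g x = mmult n x h"
proof -
  define S where "S = (MS (SU n) :: 'a mat set)"
  have A: "spt (msub g (idm n)) (SU n)" using UT_msub g by auto
  have C: "mmult n (msub g (idm n)) x \<in> S"
    unfolding S_def MS_def by (rule CollectI, rule fwd_right[OF x A A]) (auto simp: SU_def)
  have "finite S" unfolding S_def using finite_MS finite_SU by blast
  moreover have "S \<subseteq> MS ({1..n}\<times>{1..n})" unfolding S_def MS_def spt_def using SU_sub by blast
  moreover have "\<And>X. X \<in> S \<Longrightarrow> mmult n x X \<in> S"
    unfolding S_def MS_def by (rule CollectI, rule fwd_left[OF x]) (auto simp: SU_def)
  ultimately obtain D where D: "D \<in> S" "mmult n x D = mmult n (msub g (idm n)) x"
    using mult_surj[OF x _ _ _ C] by blast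
  define h where "h = (\<lambda>i j. idm n i j + D i j)"
  have hU: "h \<in> UT n" unfolding h_def using D(1) msub_UT S_def MS_def by blast
  have "msub (mmult n x h) x = msub (mmult n g x) x"
    using D(2) msub_mult_right[OF x, of h] msub_mult_left[OF x, of g]
    unfolding h_def msub_idm_add by simp
  then have "mmult n x h = mmult n g x" by (simp add: msub_def fun_eq_iff)
  then show ?thesis using hU by metis
qed

lemma IndTriv_delta:
  assumes pi: "\<pi> \<in> NO n"
  shows "IndTriv n (UTpat n \<pi> :: 'a::{finite,field} mat set) = (\<lambda>g. of_nat (card (UT n :: 'a mat set)) / of_nat (card (UTpat n \<pi> :: 'a mat set))
            * (delta n \<pi> g :: complex))" (is "_ = ?R")
proof
  fix g :: "'a mat"
  show "IndTriv n (UTpat n \<pi>) g = ?R g"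
  proof (cases "g \<in> UT n")
    case False
    then show ?thesis by (auto simp: IndTriv_def delta_def dest: UTpat_UT)
  next
    case gU: True
    show ?thesis
    proof (cases "g \<in> UTpat n \<pi>")
      case True
      have E: "{x \<in> UT n. \<exists>h\<in>UTpat n \<pi>. mmult n g x = mmult n x h} = UT n"
      proof (intro set_eqI iffI)
        fix x :: "'a mat" assume x: "x \<in> UT n"
        then obtain h where h: "h \<in> UT n" "mmult n g x = mmult n x h" using conj_exists[OF gU x] by blast
        then have "h \<in> UTpat n \<pi>" using conj_pat[OF pi gU x h(1)] True by simp
        with h x show "x \<in> {x \<in> UT n. \<exists>h\<in>UTpat n \<pi>. mmult n g x = mmult n x h}" by blast
      qed simp
      show ?thesis using True gU by (simp add: IndTriv_def delta_def E)
    next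
      case False
      have E: "{x \<in> UT n. \<exists>h\<in>UTpat n \<pi>. mmult n g x = mmult n x h} = {}"
      proof -
        have "False" if "x \<in> UT n" "h \<in> UTpat n \<pi>" "mmult n g x = mmult n x h" for x h
          using conj_pat[OF pi gU that(1) UTpat_UT[OF that(2)] that(3)] False that(2) by simp
        then show ?thesis by blast
      qed
      show ?thesis using False gU by (simp add: IndTriv_def delta_def E)
    qed
  qed
qed

lemma card_UTpat_pos: "\<pi> \<in> NO n \<Longrightarrow> card (UTpat n \<pi> :: 'a::{finite,field} mat set) > 0"
proof -
  assume pi: "\<pi> \<in> NO n"
  have "finite (UTpat n \<pi> :: 'a mat set)"
    using finite_UT by (rule finite_subset[rotated]) (auto dest: UTpat_UT)
  then show ?thesis using idm_UTpat[OF pi] card_gt_0_iff by blast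
qed

lemma card_UT_pos: "card (UT n :: 'a::{finite,field} mat set) > 0"
  using finite_UT idm_UT card_gt_0_iff by blast

lemma delta_cf: assumes pi: "\<pi> \<in> NO n" shows "(delta n \<pi> :: 'a::{finite,field} mat \<Rightarrow> complex) \<in> cf n"
  unfolding cf_def
proof (intro CollectI conjI allI impI ballI)
  fix g :: "'a mat" assume "g \<notin> UT n" then show "delta n \<pi> g = 0"
    by (auto simp: delta_def dest: UTpat_UT)
next
  fix g h x :: "'a mat" assume "g \<in> UT n" "h \<in> UT n" "x \<in> UT n" "mmult n g x = mmult n x h"
  then show "delta n \<pi> g = delta n \<pi> h" using conj_pat[OF pi, of g x h] by (simp add: delta_def)
qed

lemma cspan_zero: "(\<lambda>_. 0) \<in> cspan X"
  unfolding cspan_def by (rule CollectI, rule exI[of _ "{}"]) auto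

lemma cspan_sub: "s \<in> X \<Longrightarrow> s \<in> cspan X"
  unfolding cspan_def by (rule CollectI, rule exI[of _ "{s}"], rule exI[of _ "\<lambda>_. 1"]) auto

lemma cspan_smult: assumes "f \<in> cspan X" shows "(\<lambda>x. a * f x) \<in> cspan X"
proof -
  from assms obtain S c where S: "finite S" "S \<subseteq> X" "f = (\<lambda>x. \<Sum>s\<in>S. c s * s x)"
    unfolding cspan_def by blast
  have e: "(\<lambda>x. a * f x) = (\<lambda>x. \<Sum>s\<in>S. (a * c s) * s x)"
    using S(3) by (simp add: sum_distrib_left mult.assoc)
  show ?thesis unfolding cspan_def mem_Collect_eq
    by (intro exI[of _ S] exI[of _ "\<lambda>s. a * c s"]) (use e S in auto)
qed

lemma cspan_add: assumes "f \<in> cspan X" "g \<in> cspan X" shows "(\<lambda>x. f x + g x) \<in> cspan X"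
proof -
  from assms(1) obtain S c where S: "finite S" "S \<subseteq> X" "f = (\<lambda>x. \<Sum>s\<in>S. c s * s x)"
    unfolding cspan_def by blast
  from assms(2) obtain T d where T: "finite T" "T \<subseteq> X" "g = (\<lambda>x. \<Sum>s\<in>T. d s * s x)"
    unfolding cspan_def by blast
  define e where "e s = (if s \<in> S then c s else 0) + (if s \<in> T then d s else 0)" for s
  have "(\<Sum>s\<in>S \<union> T. e s * s x) = (\<Sum>s\<in>S. c s * s x) + (\<Sum>s\<in>T. d s * s x)" for x
  proof -
    have "(\<Sum>s\<in>S \<union> T. e s * s x) = (\<Sum>s\<in>S \<union> T. (if s \<in> S then c s * s x else 0)
        + (if s \<in> T then d s * s x else 0))"
      by (rule sum.cong) (auto simp: e_def distrib_right)
    also have "\<dots> = (\<Sum>s\<in>S \<union> T. (if s \<in> S then c s * s x else 0))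
        + (\<Sum>s\<in>S \<union> T. (if s \<in> T then d s * s x else 0))"
      by (rule sum.distrib)
    also have "(\<Sum>s\<in>S \<union> T. (if s \<in> S then c s * s x else 0)) = (\<Sum>s\<in>S. c s * s x)"
      using S(1) T(1) by (simp add: sum.inter_restrict[symmetric] Int_absorb1)
    also have "(\<Sum>s\<in>S \<union> T. (if s \<in> T then d s * s x else 0)) = (\<Sum>s\<in>T. d s * s x)"
      using S(1) T(1) by (simp add: sum.inter_restrict[symmetric] Int_absorb1)
    finally show ?thesis .
  qed
  then have e: "(\<lambda>x. f x + g x) = (\<lambda>x. \<Sum>s\<in>S \<union> T. e s * s x)" using S(3) T(3) by simp
  show ?thesis unfolding cspan_def mem_Collect_eq
    by (intro exI[of _ "S \<union> T"] exI[of _ e]) (use e S T in auto)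
qed

lemma cspan_sum: assumes "finite A" "\<And>a. a \<in> A \<Longrightarrow> f a \<in> cspan X"
  shows "(\<lambda>x. \<Sum>a\<in>A. f a x) \<in> cspan X"
  using assms
proof (induction A rule: finite_induct)
  case empty then show ?case using cspan_zero by simp
next
  case (insert a F)
  have 1: "f a \<in> cspan X" using insert.prems by simp
  have 2: "(\<lambda>x. \<Sum>a\<in>F. f a x) \<in> cspan X" using insert.IH insert.prems by simp
  have "(\<lambda>x. f a x + (\<Sum>a\<in>F. f a x)) \<in> cspan X" using cspan_add[OF 1 2] .
  then show ?case using insert.hyps by simp
qed

lemma cspan_induct:
  assumes f: "f \<in> cspan X"
    and z: "P (\<lambda>_. 0)" and ad: "\<And>f g. P f \<Longrightarrow> P g \<Longrightarrow> P (\<lambda>x. f x + g x)"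
    and sm: "\<And>a f. P f \<Longrightarrow> P (\<lambda>x. a * f x)" and X: "\<And>s. s \<in> X \<Longrightarrow> P s"
  shows "P f"
proof -
  from f obtain S c where S: "finite S" "S \<subseteq> X" "f = (\<lambda>x. \<Sum>s\<in>S. c s * s x)"
    unfolding cspan_def by blast
  have "P (\<lambda>x. \<Sum>s\<in>S. c s * s x)" using S(1,2)
  proof (induction S rule: finite_induct)
    case empty then show ?case using z by simp
  next
    case (insert a F)
    have 1: "P (\<lambda>x. \<Sum>s\<in>F. c s * s x)" using insert.IH insert.prems by simp
    have 2: "P (\<lambda>x. c a * a x)" using sm X insert.prems by simp
    have "P (\<lambda>x. c a * a x + (\<Sum>s\<in>F. c s * s x))" using ad[OF 2 1] .
    then show ?case using insert.hyps by simp
  qed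
  then show ?thesis using S by simp
qed

lemma cspan_mono1: assumes "X \<subseteq> cspan Y" and "f \<in> cspan X" shows "f \<in> cspan Y"
  using assms(2)
proof (rule cspan_induct[where P="\<lambda>f. f \<in> cspan Y"])
  show "(\<lambda>_. 0) \<in> cspan Y" by (rule cspan_zero)
next
  fix f g assume "f \<in> cspan Y" "g \<in> cspan Y" then show "(\<lambda>x. f x + g x) \<in> cspan Y" by (rule cspan_add)
next
  fix a f assume "f \<in> cspan Y" then show "(\<lambda>x. a * f x) \<in> cspan Y" by (rule cspan_smult)
next
  fix s assume "s \<in> X" then show "s \<in> cspan Y" using assms(1) by blast
qed

lemma cspan_mono: "X \<subseteq> cspan Y \<Longrightarrow> cspan X \<subseteq> cspan Y"
  using cspan_mono1 by blast

lemma scf_eq: "(scf n :: ('a::{finite,field} mat \<Rightarrow> complex) set) = cspan (delta n ` NO n)"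
proof
  show "(scf n :: ('a mat \<Rightarrow> complex) set) \<subseteq> cspan (delta n ` NO n)"
    unfolding scf_def
  proof (rule cspan_mono, safe)
    fix \<pi> assume pi: "\<pi> \<in> NO n"
    show "IndTriv n (UTpat n \<pi> :: 'a mat set) \<in> cspan (delta n ` NO n)"
      unfolding IndTriv_delta[OF pi] using pi by (intro cspan_smult[where f="delta n \<pi>"] cspan_sub) auto
  qed
next
  show "cspan (delta n ` NO n) \<subseteq> (scf n :: ('a mat \<Rightarrow> complex) set)"
    unfolding scf_def
  proof (rule cspan_mono, safe)
    fix \<pi> assume pi: "\<pi> \<in> NO n"
    define K where "K = (of_nat (card (UT n :: 'a mat set)) / of_nat (card (UTpat n \<pi> :: 'a mat set)) :: complex)"
    have K: "K \<noteq> 0" unfolding K_def using card_UT_pos[where 'a='a] card_UTpat_pos[OF pi, where 'a='a] by simp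
    have "(delta n \<pi> :: 'a mat \<Rightarrow> complex) = (\<lambda>g. inverse K * IndTriv n (UTpat n \<pi>) g)"
      unfolding IndTriv_delta[OF pi] K_def[symmetric] using K by (simp add: fun_eq_iff)
    also have "\<dots> \<in> cspan {IndTriv n (UTpat n \<pi>) |\<pi>. \<pi> \<in> NO n}"
      using pi by (intro cspan_smult[where f="IndTriv n (UTpat n \<pi>)"] cspan_sub) auto
    finally show "(delta n \<pi> :: 'a mat \<Rightarrow> complex) \<in> cspan {IndTriv n (UTpat n \<pi>) |\<pi>. \<pi> \<in> NO n}" .
  qed
qed

lemma cf_I:
  assumes "\<And>g. g \<notin> UT n \<Longrightarrow> f g = 0"
    and "\<And>g h x. g \<in> UT n \<Longrightarrow> h \<in> UT n \<Longrightarrow> x \<in> UT n \<Longrightarrow> mmult n g x = mmult n x h \<Longrightarrow> f g = f h"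
  shows "f \<in> cf n"
proof -
  have 1: "\<forall>g. g \<notin> UT n \<longrightarrow> f g = 0" using assms(1) by blast
  have 2: "\<forall>g\<in>UT n. \<forall>h\<in>UT n. \<forall>x\<in>UT n. mmult n g x = mmult n x h \<longrightarrow> f g = f h"
    using assms(2) by blast
  show ?thesis unfolding cf_def mem_Collect_eq using 1 2 by (rule conjI)
qed

lemma cf_D1: "f \<in> cf n \<Longrightarrow> g \<notin> UT n \<Longrightarrow> f g = 0"
  unfolding cf_def mem_Collect_eq by (drule conjunct1) blast

lemma cf_D2: "f \<in> cf n \<Longrightarrow> g \<in> UT n \<Longrightarrow> h \<in> UT n \<Longrightarrow> x \<in> UT n \<Longrightarrow> mmult n g x = mmult n x h \<Longrightarrow> f g = f h"
  unfolding cf_def mem_Collect_eq by (drule conjunct2) blast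

lemma scf_cf: "(scf n :: ('a::{finite,field} mat \<Rightarrow> complex) set) \<subseteq> cf n"
proof
  fix f :: "'a mat \<Rightarrow> complex" assume "f \<in> scf n"
  then have "f \<in> cspan (delta n ` NO n)" by (simp add: scf_eq)
  then show "f \<in> cf n"
  proof (rule cspan_induct[where P="\<lambda>f. f \<in> cf n"])
    show "(\<lambda>_. 0) \<in> cf n" by (rule cf_I) auto
  next
    fix f g :: "'a mat \<Rightarrow> complex" assume a: "f \<in> cf n" "g \<in> cf n"
    show "(\<lambda>x. f x + g x) \<in> cf n"
    proof (rule cf_I)
      fix u :: "'a mat" assume "u \<notin> UT n" then show "f u + g u = 0" using cf_D1[OF a(1)] cf_D1[OF a(2)] by simp
    next
      fix u v x :: "'a mat" assume b: "u \<in> UT n" "v \<in> UT n" "x \<in> UT n" "mmult n u x = mmult n x v"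
      show "f u + g u = f v + g v" using cf_D2[OF a(1) b] cf_D2[OF a(2) b] by simp
    qed
  next
    fix a and f :: "'a mat \<Rightarrow> complex" assume a: "f \<in> cf n"
    show "(\<lambda>x. a * f x) \<in> cf n"
    proof (rule cf_I)
      fix u :: "'a mat" assume "u \<notin> UT n" then show "a * f u = 0" using cf_D1[OF a] by simp
    next
      fix u v x :: "'a mat" assume b: "u \<in> UT n" "v \<in> UT n" "x \<in> UT n" "mmult n u x = mmult n x v"
      show "a * f u = a * f v" using cf_D2[OF a b] by simp
    qed
  next
    fix s :: "'a mat \<Rightarrow> complex" assume "s \<in> delta n ` NO n"
    then obtain \<pi> where "\<pi> \<in> NO n" "s = delta n \<pi>" by blast
    then show "s \<in> cf n" using delta_cf[of \<pi> n] by simp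
  qed
qed

lemma finite_NO: "finite (NO n)"
proof -
  have "NO n \<subseteq> Pow ({1..n} \<times> {1..n})" by (auto dest: NO_sub)
  then show ?thesis by (rule finite_subset) simp
qed

lemma delta_indep:
  fixes c :: "(nat \<times> nat) set \<Rightarrow> complex"
  assumes z: "\<forall>g :: 'a::{finite,field} mat. (\<Sum>\<pi>\<in>NO n. c \<pi> * delta n \<pi> g) = 0"
  shows "\<forall>\<pi>\<in>NO n. c \<pi> = 0"
proof (rule ccontr)
  assume "\<not> ?thesis"
  then have ne: "{\<pi> \<in> NO n. c \<pi> \<noteq> 0} \<noteq> {}" by blast
  have fin: "finite {\<pi> \<in> NO n. c \<pi> \<noteq> 0}" using finite_NO by simp
  obtain m where m: "m \<in> {\<pi> \<in> NO n. c \<pi> \<noteq> 0}"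
    and mx: "\<And>b. b \<in> {\<pi> \<in> NO n. c \<pi> \<noteq> 0} \<Longrightarrow> m \<le> b \<Longrightarrow> m = b"
    using finite_has_maximal[OF fin ne] by blast
  have mN: "m \<in> NO n" and cm: "c m \<noteq> 0" using m by auto
  define G :: "'a mat" where "G = (\<lambda>i j. if (i,j) \<in> m then 1 else 0)"
  have GU: "G \<in> UT n" unfolding UT_def G_def
    using NO_sub[OF mN] NO_refl[OF mN] NO_le[OF mN] by (auto simp: not_le[symmetric])
  have Gs: "G \<in> UTpat n \<sigma> \<longleftrightarrow> m \<subseteq> \<sigma>" if s: "\<sigma> \<in> NO n" for \<sigma>
  proof
    assume "G \<in> UTpat n \<sigma>"
    then have H: "\<And>i j. G i j - idm n i j \<noteq> 0 \<Longrightarrow> (i,j) \<in> \<sigma>" by (auto simp: UTpat_def)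
    show "m \<subseteq> \<sigma>"
    proof (safe)
      fix i j assume ij: "(i,j) \<in> m"
      show "(i,j) \<in> \<sigma>"
      proof (cases "i = j")
        case True then show ?thesis using NO_refl[OF s] NO_sub[OF mN ij] by auto
      next
        case False then show ?thesis using H[of i j] ij by (simp add: G_def idm_def)
      qed
    qed
  next
    assume ms: "m \<subseteq> \<sigma>"
    have "G i j - idm n i j \<noteq> 0 \<Longrightarrow> (i,j) \<in> \<sigma>" for i j
      using ms NO_refl[OF s] by (auto simp: G_def idm_def split: if_splits)
    then show "G \<in> UTpat n \<sigma>" using GU by (auto simp: UTpat_def)
  qed
  have "(\<Sum>\<pi>\<in>NO n. c \<pi> * delta n \<pi> G) = (\<Sum>\<pi>\<in>NO n. if \<pi> = m then c m else 0)"
  proof (rule sum.cong)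
    fix \<sigma> assume s: "\<sigma> \<in> NO n"
    show "c \<sigma> * delta n \<sigma> G = (if \<sigma> = m then c m else 0)"
    proof (cases "\<sigma> = m")
      case True then show ?thesis using Gs[OF s] by (simp add: delta_def)
    next
      case False
      show ?thesis
      proof (cases "m \<subseteq> \<sigma>")
        case True
        then have "c \<sigma> = 0" using mx[of \<sigma>] s False by auto
        then show ?thesis using False by simp
      next
        case nt: False then show ?thesis using Gs[OF s] False by (simp add: delta_def)
      qed
    qed
  qed simp
  also have "\<dots> = c m" using mN finite_NO by simp
  finally show False using z cm by metis
qed

lemma cano_less: assumes "finite I" "i \<in> I" "j \<in> I" "i < j" shows "cano I i < cano I j"
proof -
  have sub: "{k \<in> I. k \<le> i} \<subseteq> {k \<in> I. k \<le> j}" using assms(4) by auto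
  have "j \<in> {k \<in> I. k \<le> j} - {k \<in> I. k \<le> i}" using assms by auto
  then have "{k \<in> I. k \<le> i} \<subset> {k \<in> I. k \<le> j}" using sub by blast
  moreover have "finite {k \<in> I. k \<le> j}" using assms(1) by simp
  ultimately show ?thesis unfolding cano_def by (rule psubset_card_mono[rotated])
qed

lemma cano_le_iff: assumes "finite I" "i \<in> I" "j \<in> I" shows "cano I i \<le> cano I j \<longleftrightarrow> i \<le> j"
proof -
  have 1: "i < j \<Longrightarrow> cano I i < cano I j" using cano_less[OF assms(1,2,3)] .
  have 2: "j < i \<Longrightarrow> cano I j < cano I i" using cano_less[OF assms(1,3,2)] .
  show ?thesis
  proof (cases "i = j")
    case False
    then have "i < j \<or> j < i" by arith
    then show ?thesis using 1 2 by auto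
  qed simp
qed

lemma cano_less_iff: "finite I \<Longrightarrow> i \<in> I \<Longrightarrow> j \<in> I \<Longrightarrow> cano I i < cano I j \<longleftrightarrow> i < j"
  by (meson cano_le_iff not_le)

lemma cano_eq_iff: assumes f: "finite I" and i: "i \<in> I" and j: "j \<in> I" shows "cano I i = cano I j \<longleftrightarrow> i = j"
proof
  assume "cano I i = cano I j"
  then have "i \<le> j" "j \<le> i" using cano_le_iff[OF f i j] cano_le_iff[OF f j i] by auto
  then show "i = j" by simp
qed simp

lemma cano_inj: "finite I \<Longrightarrow> inj_on (cano I) I"
  unfolding inj_on_def using cano_eq_iff by blast

lemma cano_range: assumes "finite I" "i \<in> I" shows "cano I i \<in> {1..card I}"
proof -
  have "i \<in> {k \<in> I. k \<le> i}" using assms by simp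
  then have "card {k \<in> I. k \<le> i} > 0" using assms(1) by (subst card_gt_0_iff) auto
  then have "card {k \<in> I. k \<le> i} \<ge> 1" by simp
  moreover have "card {k \<in> I. k \<le> i} \<le> card I" using assms(1) by (intro card_mono) auto
  ultimately show ?thesis unfolding cano_def by simp
qed

lemma cano_image: assumes "finite I" shows "cano I ` I = {1..card I}"
proof -
  have "cano I ` I \<subseteq> {1..card I}" using cano_range[OF assms] by blast
  moreover have "card (cano I ` I) = card {1..card I}"
    using card_image[OF cano_inj[OF assms]] by simp
  ultimately show ?thesis by (intro card_subset_eq) auto
qed

lemma cano_bij: "finite I \<Longrightarrow> bij_betw (cano I) I {1..card I}"
  unfolding bij_betw_def using cano_inj cano_image by blast

lemma decano_in: "finite I \<Longrightarrow> i \<in> {1..card I} \<Longrightarrow> decano I i \<in> I"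
  unfolding decano_def using the_inv_into_into[OF cano_inj, of I i I] cano_image by auto

lemma cano_decano: "finite I \<Longrightarrow> i \<in> {1..card I} \<Longrightarrow> cano I (decano I i) = i"
  unfolding decano_def using f_the_inv_into_f[OF cano_inj, of I i] cano_image by auto

lemma decano_cano: "finite I \<Longrightarrow> i \<in> I \<Longrightarrow> decano I (cano I i) = i"
  unfolding decano_def using the_inv_into_f_f[OF cano_inj] by auto

lemma decano_less_iff: "finite I \<Longrightarrow> i \<in> {1..card I} \<Longrightarrow> j \<in> {1..card I} \<Longrightarrow>
   decano I i < decano I j \<longleftrightarrow> i < j"
  by (metis cano_decano cano_less_iff decano_in)

lemma decano_eq_iff: "finite I \<Longrightarrow> i \<in> {1..card I} \<Longrightarrow> j \<in> {1..card I} \<Longrightarrow>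
   decano I i = decano I j \<longleftrightarrow> i = j"
  by (metis cano_decano)

lemma cano_init: "i \<in> {1..n} \<Longrightarrow> cano {1..n} i = i"
proof -
  assume "i \<in> {1..n}"
  then have "{k \<in> {1..n}. k \<le> i} = {1..i}" by auto
  then show ?thesis unfolding cano_def by simp
qed

lemma decano_init: "i \<in> {1..n} \<Longrightarrow> decano {1..n} i = i"
  by (metis cano_init decano_cano finite_atLeastAtMost)

lemma rest_eq: "{1..n+m} - {1..n} = {n+1..n+(m::nat)}" by auto

lemma cano_rest: "i \<in> {1..n+m} - {1..n} \<Longrightarrow> cano ({1..n+m} - {1..n}) i = i - n"
proof -
  assume a: "i \<in> {1..n+m} - {1..n}"
  then have "{k \<in> {1..n+m} - {1..n}. k \<le> i} = {n+1..i}" by auto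
  then show ?thesis unfolding cano_def by simp
qed

lemma card_rest: "card ({1..n+m} - {1..n}) = m"
  unfolding rest_eq by simp

lemma decano_rest: "i \<in> {1..m} \<Longrightarrow> decano ({1..n+m} - {1..n}) i = i + n"
proof -
  assume a: "i \<in> {1..m}"
  then have "i + n \<in> {1..n+m} - {1..n}" by auto
  then have "decano ({1..n+m} - {1..n}) (cano ({1..n+m} - {1..n}) (i+n)) = i + n"
    by (intro decano_cano) auto
  then show ?thesis using cano_rest[OF \<open>i + n \<in> _\<close>] by simp
qed

definition blk :: "nat \<Rightarrow> nat set \<Rightarrow> (nat \<times> nat) set" where
  "blk N I = I \<times> I \<union> ({1..N} - I) \<times> ({1..N} - I)"

definition off :: "nat \<Rightarrow> nat set \<Rightarrow> (nat \<times> nat) set" where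
  "off N I = I \<times> ({1..N} - I)"

lemma UL_iff: "l \<in> UL N I \<longleftrightarrow> l \<in> UT N \<and> spt (msub l (idm N)) (blk N I)"
  unfolding UL_def spt_def msub_def blk_def by blast

lemma UR_iff: "r \<in> UR N I \<longleftrightarrow> r \<in> UT N \<and> spt (msub r (idm N)) (off N I)"
  unfolding UR_def spt_def msub_def off_def by blast

lemma UL_UT: "l \<in> UL N I \<Longrightarrow> l \<in> UT N" by (simp add: UL_iff)
lemma UR_UT: "r \<in> UR N I \<Longrightarrow> r \<in> UT N" by (simp add: UR_iff)

lemma UL_nz: assumes l: "l \<in> UL N I" and nz: "l i k \<noteq> 0"
  shows "(i \<in> I \<longleftrightarrow> k \<in> I) \<and> i \<in> {1..N} \<and> k \<in> {1..N}"
proof -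
  have ik: "i \<in> {1..N}" "k \<in> {1..N}" using UT_nz[OF UL_UT[OF l] nz] by auto
  show ?thesis
  proof (cases "i = k")
    case False
    then have "msub l (idm N) i k \<noteq> 0" using nz by (simp add: msub_def idm_def)
    then have "(i,k) \<in> blk N I" using l by (simp add: UL_iff spt_def)
    then show ?thesis using ik by (auto simp: blk_def)
  qed (use ik in auto)
qed

lemma ULX:
  assumes l: "l \<in> UL N I" and X: "spt X (off N I)"
  shows "spt (mmult N l X) (off N I)"
  unfolding spt_def
proof (intro allI impI)
  fix i j assume nz: "mmult N l X i j \<noteq> 0"
  then have ij: "i \<in> {1..N}" "j \<in> {1..N}" and s: "(\<Sum>k\<in>{1..N}. l i k * X k j) \<noteq> 0"
    by (auto simp: mmult_def split: if_splits)
  from s obtain k where k: "k \<in> {1..N}" "l i k * X k j \<noteq> 0"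
    by (meson sum.neutral)
  then have lk: "l i k \<noteq> 0" and xk: "X k j \<noteq> 0" by auto
  from xk X have "(k,j) \<in> off N I" by (simp add: spt_def)
  then have "k \<in> I" "j \<in> {1..N} - I" by (auto simp: off_def)
  moreover have "i \<in> I" using UL_nz[OF l lk] \<open>k \<in> I\<close> by blast
  ultimately show "(i,j) \<in> off N I" by (simp add: off_def)
qed

lemma mult_add_entry:
  assumes l: "l \<in> UT N"
  shows "mmult N l r i j = l i j + mmult N l (msub r (idm N)) i j"
  using msub_mult_right[OF l, of r] by (simp add: msub_def fun_eq_iff)

definition Lb :: "nat \<Rightarrow> 'a::field mat \<Rightarrow> 'a mat" where
  "Lb n g = (\<lambda>i j. if (i \<le> n \<longleftrightarrow> j \<le> n) then g i j else 0)"

lemma Lb_UL: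
  assumes g: "g \<in> UT N" and nN: "n \<le> N"
  shows "Lb n g \<in> UL N {1..n}"
proof -
  have U: "Lb n g \<in> UT N"
    unfolding UT_def Lb_def using UT_out[OF g] UT_diag[OF g] UT_low[OF g] by auto
  have "spt (msub (Lb n g) (idm N)) (blk N {1..n})"
    unfolding spt_def
  proof (intro allI impI)
    fix i j assume nz: "msub (Lb n g) (idm N) i j \<noteq> 0"
    show "(i,j) \<in> blk N {1..n}"
    proof (cases "i \<le> n \<longleftrightarrow> j \<le> n")
      case True
      then have "g i j - idm N i j \<noteq> 0" using nz by (simp add: msub_def Lb_def)
      then have "i \<in> {1..N} \<and> j \<in> {1..N}" using UT_out[OF g] by (auto simp: idm_def split: if_splits)
      then show ?thesis using True by (auto simp: blk_def)
    next
      case False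
      then have "i \<noteq> j" by auto
      then show ?thesis using nz False by (simp add: msub_def Lb_def idm_def)
    qed
  qed
  then show ?thesis using U by (simp add: UL_iff)
qed

lemma Infl_THE:
  fixes g :: "'a::{finite,field} mat"
  assumes g: "g \<in> UT N" and nN: "n \<le> N"
  shows "(THE l. l \<in> UL N {1..n} \<and> (\<exists>r\<in>UR N {1..n}. g = mmult N l r)) = Lb n g"
proof (rule the_equality)
  define L where "L = Lb n g"
  have LUL: "L \<in> UL N {1..n}" unfolding L_def by (rule Lb_UL[OF g nN])
  have LU: "L \<in> UT N" using UL_UT[OF LUL] .
  define S where "S = (MS (off N {1..n}) :: 'a mat set)"
  define C where "C = (\<lambda>i j. if i \<le> n \<and> n < j then g i j else 0)"
  have offsub: "off N {1..n} \<subseteq> {1..N} \<times> {1..N}" by (auto simp: off_def)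
  have CS: "C \<in> S" unfolding S_def MS_def spt_def C_def off_def
    using UT_nz[OF g] by auto
  have "finite S" unfolding S_def by (rule finite_MS) (simp add: off_def)
  moreover have "S \<subseteq> MS ({1..N}\<times>{1..N})" unfolding S_def MS_def spt_def using offsub by blast
  moreover have "\<And>X. X \<in> S \<Longrightarrow> mmult N L X \<in> S"
    unfolding S_def MS_def using ULX[OF LUL] by blast
  ultimately obtain X where X: "X \<in> S" "mmult N L X = C"
    using mult_surj[OF LU _ _ _ CS] by blast
  define r where "r = (\<lambda>i j. idm N i j + X i j)"
  have XSU: "spt X (SU N)" using X(1) unfolding S_def MS_def spt_def off_def SU_def by fastforce
  have rU: "r \<in> UT N" unfolding r_def by (rule msub_UT[OF XSU])
  have rX: "msub r (idm N) = X" unfolding r_def by (simp add: msub_def)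
  have rUR: "r \<in> UR N {1..n}" using rU rX X(1) by (simp add: UR_iff S_def MS_def)
  have "mmult N L r = g"
  proof (rule ext, rule ext)
    fix i j
    have "mmult N L r i j = L i j + C i j" using mult_add_entry[OF LU, of r i j] rX X(2) by simp
    also have "\<dots> = g i j"
      using UT_low[OF g, of j i] by (auto simp: L_def Lb_def C_def)
    finally show "mmult N L r i j = g i j" .
  qed
  then have "L \<in> UL N {1..n} \<and> (\<exists>r\<in>UR N {1..n}. g = mmult N L r)" using LUL rUR by auto
  then show "Lb n g \<in> UL N {1..n} \<and> (\<exists>r\<in>UR N {1..n}. g = mmult N (Lb n g) r)" unfolding L_def .
next
  fix l assume a: "l \<in> UL N {1..n} \<and> (\<exists>r\<in>UR N {1..n}. g = mmult N l r)"
  then obtain r where l: "l \<in> UL N {1..n}" and r: "r \<in> UR N {1..n}" and gl: "g = mmult N l r" by blast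
  have lU: "l \<in> UT N" using UL_UT[OF l] .
  have Xo: "spt (msub r (idm N)) (off N {1..n})" using r by (simp add: UR_iff)
  have lX: "spt (mmult N l (msub r (idm N))) (off N {1..n})" by (rule ULX[OF l Xo])
  show "l = Lb n g"
  proof (rule ext, rule ext)
    fix i j
    have e: "g i j = l i j + mmult N l (msub r (idm N)) i j"
      unfolding gl by (rule mult_add_entry[OF lU])
    show "l i j = Lb n g i j"
    proof (cases "i \<le> n \<longleftrightarrow> j \<le> n")
      case True
      then have "(i,j) \<notin> off N {1..n}" by (auto simp: off_def)
      then have "mmult N l (msub r (idm N)) i j = 0" using lX by (auto simp: spt_def)
      then show ?thesis using e True by (simp add: Lb_def)
    next
      case False
      have "l i j = 0"
      proof (rule ccontr)
        assume "l i j \<noteq> 0"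
        from UL_nz[OF l this] False show False by auto
      qed
      then show ?thesis using False by (simp add: Lb_def)
    qed
  qed
qed

definition P1 :: "nat \<Rightarrow> nat \<Rightarrow> 'a::field mat \<Rightarrow> 'a mat" where
  "P1 n m g = sub {1..n} (THE l. l \<in> UL (n + m) {1..n} \<and> (\<exists>r\<in>UR (n + m) {1..n}. g = mmult (n + m) l r))"

definition P2 :: "nat \<Rightarrow> nat \<Rightarrow> 'a::field mat \<Rightarrow> 'a mat" where
  "P2 n m g = sub ({1..n+m} - {1..n}) (THE l. l \<in> UL (n + m) {1..n} \<and> (\<exists>r\<in>UR (n + m) {1..n}. g = mmult (n + m) l r))"

lemma mu_expand: "mu n m f h = (\<lambda>g. if g \<in> UT (n+m) then f (P1 n m g) * h (P2 n m g) else 0)"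
  by (simp add: mu_def Infl_def P1_def P2_def fun_eq_iff)

lemma P1_eq:
  fixes g :: "'a::{finite,field} mat"
  assumes g: "g \<in> UT (n+m)"
  shows "P1 n m g = (\<lambda>i j. if i \<in> {1..n} \<and> j \<in> {1..n} then g i j else 0)"
proof (rule ext, rule ext)
  fix i j
  show "P1 n m g i j = (if i \<in> {1..n} \<and> j \<in> {1..n} then g i j else 0)"
  proof (cases "i \<in> {1..n} \<and> j \<in> {1..n}")
    case True
    then have "decano {1..n} i = i" "decano {1..n} j = j"
      using decano_init by auto
    then show ?thesis unfolding P1_def Infl_THE[OF g le_add1] sub_def
      using True by (simp add: Lb_def)
  next
    case False
    then show ?thesis unfolding P1_def Infl_THE[OF g le_add1] sub_def by auto
  qed
qed

lemma P2_eq: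
  fixes g :: "'a::{finite,field} mat"
  assumes g: "g \<in> UT (n+m)"
  shows "P2 n m g = (\<lambda>i j. if i \<in> {1..m} \<and> j \<in> {1..m} then g (i+n) (j+n) else 0)"
proof (rule ext, rule ext)
  fix i j
  show "P2 n m g i j = (if i \<in> {1..m} \<and> j \<in> {1..m} then g (i+n) (j+n) else 0)"
  proof (cases "i \<in> {1..m} \<and> j \<in> {1..m}")
    case True
    then have "decano ({1..n+m} - {1..n}) i = i + n" "decano ({1..n+m} - {1..n}) j = j + n"
      using decano_rest by auto
    then show ?thesis unfolding P2_def Infl_THE[OF g le_add1] sub_def card_rest
      using True by (simp add: Lb_def)
  next
    case False
    then show ?thesis unfolding P2_def Infl_THE[OF g le_add1] sub_def card_rest by auto
  qed
qed

lemma ostar_mem: assumes rho: "\<rho> \<in> NO m"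
  shows "(i,j) \<in> ostar n m \<pi> \<rho> \<longleftrightarrow> (i,j) \<in> \<pi> \<or> (n < i \<and> n < j \<and> (i-n,j-n) \<in> \<rho>) \<or> (i \<in> {1..n} \<and> n < j \<and> j \<le> n+m)"
proof -
  have "(i,j) \<in> {(a + n, b + n) | a b. (a, b) \<in> \<rho>} \<longleftrightarrow> (n < i \<and> n < j \<and> (i-n,j-n) \<in> \<rho>)"
  proof
    assume "(i,j) \<in> {(a + n, b + n) | a b. (a, b) \<in> \<rho>}"
    then obtain a b where "i = a + n" "j = b + n" "(a,b) \<in> \<rho>" by blast
    moreover then have "a \<ge> 1" "b \<ge> 1" using NO_sub[OF rho] by auto
    ultimately show "n < i \<and> n < j \<and> (i-n,j-n) \<in> \<rho>" by simp
  next
    assume a: "n < i \<and> n < j \<and> (i-n,j-n) \<in> \<rho>"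
    then have "i = (i-n) + n" "j = (j-n) + n" by auto
    then show "(i,j) \<in> {(a + n, b + n) | a b. (a, b) \<in> \<rho>}" using a by blast
  qed
  then show ?thesis unfolding ostar_def by auto
qed

lemma UTpat_all: "g \<in> UT N \<Longrightarrow> g \<in> UTpat N \<sigma> \<longleftrightarrow> (\<forall>i j. g i j - idm N i j \<noteq> 0 \<longrightarrow> (i,j) \<in> \<sigma>)"
  by (simp add: UTpat_def)

lemma mu_delta:
  assumes pi: "\<pi> \<in> NO n" and rho: "\<rho> \<in> NO m"
  shows "mu n m (delta n \<pi>) (delta m \<rho>) = (delta (n + m) (ostar n m \<pi> \<rho>) :: 'a::{finite,field} mat \<Rightarrow> complex)"
proof (rule ext)
  fix g :: "'a mat"
  show "mu n m (delta n \<pi>) (delta m \<rho>) g = delta (n + m) (ostar n m \<pi> \<rho>) g"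
  proof (cases "g \<in> UT (n+m)")
    case False
    then show ?thesis by (simp add: mu_expand delta_def UTpat_def)
  next
    case g: True
    define A where "A = (\<lambda>i j. if i \<in> {1..n} \<and> j \<in> {1..n} then g i j else 0)"
    define B where "B = (\<lambda>i j. if i \<in> {1..m} \<and> j \<in> {1..m} then g (i+n) (j+n) else 0)"
    have AU: "A \<in> UT n" unfolding UT_def A_def using UT_diag[OF g] UT_low[OF g] by auto
    have BU: "B \<in> UT m" unfolding UT_def B_def using UT_diag[OF g] UT_low[OF g] by auto
    have Apat: "A \<in> UTpat n \<pi> \<longleftrightarrow> (\<forall>i\<in>{1..n}. \<forall>j\<in>{1..n}. g i j - idm (n+m) i j \<noteq> 0 \<longrightarrow> (i,j) \<in> \<pi>)"
      unfolding UTpat_all[OF AU] by (auto simp: A_def idm_def)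
    have Bpat: "B \<in> UTpat m \<rho> \<longleftrightarrow> (\<forall>i\<in>{1..m}. \<forall>j\<in>{1..m}. g (i+n) (j+n) - idm (n+m) (i+n) (j+n) \<noteq> 0 \<longrightarrow> (i,j) \<in> \<rho>)"
      unfolding UTpat_all[OF BU] by (auto simp: B_def idm_def)
    have nzg: "i \<in> {1..n+m} \<and> j \<in> {1..n+m} \<and> i \<le> j" if "g i j - idm (n+m) i j \<noteq> 0" for i j
    proof -
      have "g i j \<noteq> 0 \<or> (idm (n+m) i j :: 'a) \<noteq> 0"
      proof (rule ccontr)
        assume "\<not> (g i j \<noteq> 0 \<or> (idm (n+m) i j :: 'a) \<noteq> 0)"
        then have "g i j = 0" "(idm (n+m) i j :: 'a) = 0" by auto
        then show False using that by simp
      qed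
      then show ?thesis using UT_nz[OF g] UT_nz[OF idm_UT] by blast
    qed
    have "(A \<in> UTpat n \<pi> \<and> B \<in> UTpat m \<rho>) \<longleftrightarrow> g \<in> UTpat (n+m) (ostar n m \<pi> \<rho>)"
    proof
      assume ab: "A \<in> UTpat n \<pi> \<and> B \<in> UTpat m \<rho>"
      show "g \<in> UTpat (n+m) (ostar n m \<pi> \<rho>)"
        unfolding UTpat_all[OF g]
      proof (intro allI impI)
        fix i j assume nz: "g i j - idm (n+m) i j \<noteq> 0"
        note ij = nzg[OF nz]
        show "(i,j) \<in> ostar n m \<pi> \<rho>"
        proof (cases "j \<le> n")
          case True
          then have "(i,j) \<in> \<pi>" using ab Apat ij nz by auto
          then show ?thesis unfolding ostar_mem[OF rho] by blast
        next
          case jn: False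
          show ?thesis
          proof (cases "i \<le> n")
            case True then show ?thesis unfolding ostar_mem[OF rho] using ij jn by auto
          next
            case False
            then have "i - n \<in> {1..m}" "j - n \<in> {1..m}" "i - n + n = i" "j - n + n = j" using ij jn by auto
            then have "(i-n, j-n) \<in> \<rho>" using ab Bpat nz by metis
            then show ?thesis unfolding ostar_mem[OF rho] using False jn by auto
          qed
        qed
      qed
    next
      assume gp: "g \<in> UTpat (n+m) (ostar n m \<pi> \<rho>)"
      then have H: "\<And>i j. g i j - idm (n+m) i j \<noteq> 0 \<Longrightarrow> (i,j) \<in> ostar n m \<pi> \<rho>"
        using UTpat_all[OF g] by blast
      have "A \<in> UTpat n \<pi>" unfolding Apat
      proof (intro ballI impI)
        fix i j assume ij: "i \<in> {1..n}" "j \<in> {1..n}" and nz: "g i j - idm (n+m) i j \<noteq> 0"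
        then show "(i,j) \<in> \<pi>" using H[OF nz] unfolding ostar_mem[OF rho] by auto
      qed
      moreover have "B \<in> UTpat m \<rho>" unfolding Bpat
      proof (intro ballI impI)
        fix i j assume ij: "i \<in> {1..m}" "j \<in> {1..m}" and nz: "g (i+n) (j+n) - idm (n+m) (i+n) (j+n) \<noteq> 0"
        have "(i+n, j+n) \<in> ostar n m \<pi> \<rho>" using H[OF nz] .
        moreover have "(i+n, j+n) \<notin> \<pi>" using NO_sub[OF pi, of "i+n" "j+n"] ij by auto
        ultimately show "(i,j) \<in> \<rho>" unfolding ostar_mem[OF rho] using ij by auto
      qed
      ultimately show "A \<in> UTpat n \<pi> \<and> B \<in> UTpat m \<rho>" by blast
    qed
    note E = this
    have "P1 n m g = A" unfolding P1_eq[OF g] A_def ..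
    moreover have "P2 n m g = B" unfolding P2_eq[OF g] B_def ..
    ultimately show ?thesis unfolding mu_expand using g E by (simp add: delta_def) blast
  qed
qed

context
  fixes n m :: nat and \<pi> \<rho> :: "(nat \<times> nat) set"
  assumes pi: "\<pi> \<in> NO n" and rho: "\<rho> \<in> NO m"
begin

lemma os_cases:
  assumes "(i,j) \<in> ostar n m \<pi> \<rho>"
  obtains (P) "(i,j) \<in> \<pi>" "i \<in> {1..n}" "j \<in> {1..n}" "i \<le> j"
    | (R) "n < i" "n < j" "(i-n,j-n) \<in> \<rho>" "i - n \<in> {1..m}" "j - n \<in> {1..m}" "i \<le> j"
    | (X) "i \<in> {1..n}" "n < j" "j \<le> n+m"
proof -
  from assms have "(i,j) \<in> \<pi> \<or> (n < i \<and> n < j \<and> (i-n,j-n) \<in> \<rho>) \<or> (i \<in> {1..n} \<and> n < j \<and> j \<le> n+m)"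
    using ostar_mem[OF rho] by blast
  then show thesis
  proof (elim disjE)
    assume a: "(i,j) \<in> \<pi>"
    then show thesis using P NO_sub[OF pi a] NO_le[OF pi a] by blast
  next
    assume a: "n < i \<and> n < j \<and> (i-n,j-n) \<in> \<rho>"
    then have "i - n \<le> j - n" using NO_le[OF rho] by blast
    then have "i \<le> j" using a by arith
    then show thesis using R a NO_sub[OF rho] by blast
  next
    assume "i \<in> {1..n} \<and> n < j \<and> j \<le> n+m" then show thesis using X by blast
  qed
qed

lemma os_P: "(i,j) \<in> \<pi> \<Longrightarrow> (i,j) \<in> ostar n m \<pi> \<rho>"
  using ostar_mem[OF rho] by blast
lemma os_R: "n < i \<Longrightarrow> n < j \<Longrightarrow> (i-n,j-n) \<in> \<rho> \<Longrightarrow> (i,j) \<in> ostar n m \<pi> \<rho>"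
  using ostar_mem[OF rho] by blast
lemma os_X: "i \<in> {1..n} \<Longrightarrow> n < j \<Longrightarrow> j \<le> n+m \<Longrightarrow> (i,j) \<in> ostar n m \<pi> \<rho>"
  using ostar_mem[OF rho] by blast

lemma os_le: "(i,j) \<in> ostar n m \<pi> \<rho> \<Longrightarrow> i \<le> j"
  by (erule os_cases) auto

lemma os_sub: "(i,j) \<in> ostar n m \<pi> \<rho> \<Longrightarrow> i \<in> {1..n+m} \<and> j \<in> {1..n+m}"
  by (erule os_cases) auto

lemma os_refl: "i \<in> {1..n+m} \<Longrightarrow> (i,i) \<in> ostar n m \<pi> \<rho>"
proof -
  assume i: "i \<in> {1..n+m}"
  show ?thesis
  proof (cases "i \<le> n")
    case True then show ?thesis using i NO_refl[OF pi, of i] os_P by auto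
  next
    case False
    then have "i - n \<in> {1..m}" using i by auto
    then show ?thesis using NO_refl[OF rho] os_R False by auto
  qed
qed

lemma os_trans: assumes a: "(i,j) \<in> ostar n m \<pi> \<rho>" and b: "(j,k) \<in> ostar n m \<pi> \<rho>"
  shows "(i,k) \<in> ostar n m \<pi> \<rho>"
  using a
proof (cases rule: os_cases)
  case P
  note p = P
  from b show ?thesis
  proof (cases rule: os_cases)
    case P
    then have "(i,k) \<in> \<pi>" using p pi unfolding NO_iff trans_def by blast
    then show ?thesis by (rule os_P)
  next
    case R then show ?thesis using p by auto
  next
    case X then show ?thesis using p os_X by auto
  qed
next
  case R
  note r = R
  from b show ?thesis
  proof (cases rule: os_cases)
    case P then show ?thesis using r by auto
  next
    case R
    then have "(i-n,k-n) \<in> \<rho>" using r rho unfolding NO_iff trans_def by blast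
    then show ?thesis using os_R r R by auto
  next
    case X then show ?thesis using r by auto
  qed
next
  case X
  note x = X
  from b show ?thesis
  proof (cases rule: os_cases)
    case P then show ?thesis using x by auto
  next
    case R then show ?thesis using x os_X by auto
  next
    case X then show ?thesis using x by auto
  qed
qed

lemma os_ideal:
  assumes a: "(j,k) \<in> ostar n m \<pi> \<rho>" and jk: "j \<noteq> k" and i: "i \<in> {1..n+m}" and l: "l \<in> {1..n+m}"
    and ij: "i \<le> j" and kl: "k \<le> l"
  shows "(i,l) \<in> ostar n m \<pi> \<rho>"
  using a
proof (cases rule: os_cases)
  case P
  show ?thesis
  proof (cases "l \<le> n")
    case True
    then have "(i,l) \<in> \<pi>" using NO_ideal[OF pi P(1) jk] i l ij kl P by auto
    then show ?thesis by (rule os_P)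
  next
    case False then show ?thesis using os_X i ij P l by auto
  qed
next
  case R
  show ?thesis
  proof (cases "i \<le> n")
    case True then show ?thesis using os_X i R kl l by auto
  next
    case False
    have "(i-n, l-n) \<in> \<rho>"
      by (rule NO_ideal[OF rho R(3)]) (use jk R False i l ij kl in auto)
    then show ?thesis using os_R False R kl by auto
  qed
next
  case X then show ?thesis using os_X i ij l kl by auto
qed

lemma ostar_NO: "ostar n m \<pi> \<rho> \<in> NO (n+m)"
  unfolding NO_iff
proof (intro conjI)
  show "ostar n m \<pi> \<rho> \<subseteq> {1..n + m} \<times> {1..n + m}" using os_sub by auto
  show "\<forall>i\<in>{1..n + m}. (i, i) \<in> ostar n m \<pi> \<rho>" using os_refl by blast
  show "antisym (ostar n m \<pi> \<rho>)" unfolding antisym_def using os_le by (meson order_antisym)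
  show "trans (ostar n m \<pi> \<rho>)" unfolding trans_def using os_trans by blast
  show "\<forall>(i, j)\<in>ostar n m \<pi> \<rho>. i \<le> j" using os_le by auto
  show "\<forall>(j, k)\<in>ostar n m \<pi> \<rho>. j \<noteq> k \<longrightarrow>
      (\<forall>i\<in>{1..n + m}. \<forall>l\<in>{1..n + m}. i \<le> j \<and> k \<le> l \<longrightarrow> (i, l) \<in> ostar n m \<pi> \<rho>)"
    using os_ideal by blast
qed

end

lemma mu_zero_l: "mu n m (\<lambda>_. 0) h = (\<lambda>_. 0)" by (simp add: mu_expand fun_eq_iff)
lemma mu_zero_r: "mu n m f (\<lambda>_. 0) = (\<lambda>_. 0)" by (simp add: mu_expand fun_eq_iff)
lemma mu_add_l: "mu n m (\<lambda>x. f1 x + f2 x) h = (\<lambda>g. mu n m f1 h g + mu n m f2 h g)"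
  by (simp add: mu_expand fun_eq_iff distrib_right)
lemma mu_add_r: "mu n m f (\<lambda>x. h1 x + h2 x) = (\<lambda>g. mu n m f h1 g + mu n m f h2 g)"
  by (simp add: mu_expand fun_eq_iff distrib_left)
lemma mu_smult_l: "mu n m (\<lambda>x. a * f x) h = (\<lambda>g. a * mu n m f h g)"
  by (simp add: mu_expand fun_eq_iff)
lemma mu_smult_r: "mu n m f (\<lambda>x. a * h x) = (\<lambda>g. a * mu n m f h g)"
  by (simp add: mu_expand fun_eq_iff)

lemma mu_span:
  assumes f: "f \<in> cspan X" and h: "h \<in> cspan Y"
    and st: "\<And>s t. s \<in> X \<Longrightarrow> t \<in> Y \<Longrightarrow> mu n m s t \<in> cspan Z"
  shows "mu n m f h \<in> cspan Z"
  using f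
proof (rule cspan_induct[where P="\<lambda>f. mu n m f h \<in> cspan Z"])
  show "mu n m (\<lambda>_. 0) h \<in> cspan Z" unfolding mu_zero_l by (rule cspan_zero)
next
  fix f1 f2 assume "mu n m f1 h \<in> cspan Z" "mu n m f2 h \<in> cspan Z"
  then show "mu n m (\<lambda>x. f1 x + f2 x) h \<in> cspan Z" unfolding mu_add_l by (rule cspan_add)
next
  fix a f assume "mu n m f h \<in> cspan Z"
  then show "mu n m (\<lambda>x. a * f x) h \<in> cspan Z" unfolding mu_smult_l by (rule cspan_smult)
next
  fix s assume s: "s \<in> X"
  show "mu n m s h \<in> cspan Z"
    using h
  proof (rule cspan_induct[where P="\<lambda>h. mu n m s h \<in> cspan Z"])
    show "mu n m s (\<lambda>_. 0) \<in> cspan Z" unfolding mu_zero_r by (rule cspan_zero)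
  next
    fix f1 f2 assume "mu n m s f1 \<in> cspan Z" "mu n m s f2 \<in> cspan Z"
    then show "mu n m s (\<lambda>x. f1 x + f2 x) \<in> cspan Z" unfolding mu_add_r by (rule cspan_add)
  next
    fix a f assume "mu n m s f \<in> cspan Z"
    then show "mu n m s (\<lambda>x. a * f x) \<in> cspan Z" unfolding mu_smult_r by (rule cspan_smult)
  next
    fix t assume "t \<in> Y" then show "mu n m s t \<in> cspan Z" using st s by blast
  qed
qed

lemma mu_scf:
  fixes f h :: "'a::{finite,field} mat \<Rightarrow> complex"
  assumes f: "f \<in> scf n" and h: "h \<in> scf m"
  shows "mu n m f h \<in> scf (n + m)"
proof -
  have "mu n m f h \<in> cspan (delta (n+m) ` NO (n+m) :: ('a mat \<Rightarrow> complex) set)"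
  proof (rule mu_span)
    show "f \<in> cspan (delta n ` NO n)" using f by (simp add: scf_eq)
    show "h \<in> cspan (delta m ` NO m)" using h by (simp add: scf_eq)
  next
    fix s t :: "'a mat \<Rightarrow> complex"
    assume "s \<in> delta n ` NO n" "t \<in> delta m ` NO m"
    then obtain \<pi> \<rho> where pr: "\<pi> \<in> NO n" "\<rho> \<in> NO m" "s = delta n \<pi>" "t = delta m \<rho>" by blast
    have "mu n m s t = delta (n+m) (ostar n m \<pi> \<rho>)" using mu_delta[OF pr(1,2)] pr by simp
    moreover have "ostar n m \<pi> \<rho> \<in> NO (n+m)" by (rule ostar_NO[OF pr(1,2)])
    ultimately show "mu n m s t \<in> cspan (delta (n+m) ` NO (n+m))"
      by (simp add: cspan_sub)
  qed
  then show ?thesis by (simp add: scf_eq)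
qed

lemma finite_sub_n: "I \<subseteq> {1..(n::nat)} \<Longrightarrow> finite I"
  using finite_subset[of I "{1..n}"] by simp

lemma card_compl: "I \<subseteq> {1..n} \<Longrightarrow> card ({1..n} - I) = n - card I"
  by (simp add: card_Diff_subset finite_sub_n)

lemma shres_mem:
  assumes J: "finite J"
  shows "(i', j') \<in> shres J \<pi> \<longleftrightarrow> i' \<in> {1..card J} \<and> j' \<in> {1..card J} \<and> (decano J i', decano J j') \<in> \<pi>"
proof
  assume "(i', j') \<in> shres J \<pi>"
  then obtain i j where ij: "i' = cano J i" "j' = cano J j" "(i,j) \<in> \<pi>" "i \<in> J" "j \<in> J"
    unfolding shres_def by blast
  have 1: "i' \<in> {1..card J}" using cano_range[OF J ij(4)] ij(1) by simp
  have 2: "j' \<in> {1..card J}" using cano_range[OF J ij(5)] ij(2) by simp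
  have 3: "decano J i' = i" using decano_cano[OF J ij(4)] ij(1) by simp
  have 4: "decano J j' = j" using decano_cano[OF J ij(5)] ij(2) by simp
  show "i' \<in> {1..card J} \<and> j' \<in> {1..card J} \<and> (decano J i', decano J j') \<in> \<pi>"
    using 1 2 3 4 ij(3) by simp
next
  assume a: "i' \<in> {1..card J} \<and> j' \<in> {1..card J} \<and> (decano J i', decano J j') \<in> \<pi>"
  have 1: "i' = cano J (decano J i')" using cano_decano[OF J] a by simp
  have 2: "j' = cano J (decano J j')" using cano_decano[OF J] a by simp
  have 3: "decano J i' \<in> J" "decano J j' \<in> J" using decano_in[OF J] a by auto
  show "(i', j') \<in> shres J \<pi>" unfolding shres_def
    using 1 2 3 a by blast
qed

lemma decano_le: "finite J \<Longrightarrow> i \<in> {1..card J} \<Longrightarrow> j \<in> {1..card J} \<Longrightarrow> decano J i \<le> decano J j \<longleftrightarrow> i \<le> j"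
  using decano_less_iff[of J j i] by (simp add: not_less[symmetric])

lemma shres_NO:
  assumes pi: "\<pi> \<in> NO n" and J: "J \<subseteq> {1..n}"
  shows "shres J \<pi> \<in> NO (card J)"
proof -
  have fJ: "finite J" using J finite_sub_n by blast
  note mem = shres_mem[OF fJ]
  have dJ: "decano J i \<in> {1..n}" if "i \<in> {1..card J}" for i using decano_in[OF fJ that] J by blast
  show ?thesis unfolding NO_iff
  proof (intro conjI)
    show "shres J \<pi> \<subseteq> {1..card J} \<times> {1..card J}" using mem by auto
    show "\<forall>i\<in>{1..card J}. (i, i) \<in> shres J \<pi>" using mem NO_refl[OF pi] dJ by auto
    have le: "i \<le> j" if "(i,j) \<in> shres J \<pi>" for i j
      using mem[of i j] that NO_le[OF pi] decano_le[OF fJ, of i j] by auto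
    show "antisym (shres J \<pi>)"
    proof (rule antisymI)
      fix x y assume "(x,y) \<in> shres J \<pi>" "(y,x) \<in> shres J \<pi>"
      then show "x = y" using le[of x y] le[of y x] by simp
    qed
    have tpi: "trans \<pi>" using pi[unfolded NO_iff] by (elim conjE)
    show "trans (shres J \<pi>)"
    proof (rule transI)
      fix x y z assume a: "(x,y) \<in> shres J \<pi>" "(y,z) \<in> shres J \<pi>"
      then have "(decano J x, decano J y) \<in> \<pi>" "(decano J y, decano J z) \<in> \<pi>"
        "x \<in> {1..card J}" "z \<in> {1..card J}" using mem by auto
      then have "(decano J x, decano J z) \<in> \<pi>" using transD[OF tpi] by blast
      then show "(x,z) \<in> shres J \<pi>" using mem \<open>x \<in> _\<close> \<open>z \<in> _\<close> by auto
    qed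
    show "\<forall>(i, j)\<in>shres J \<pi>. i \<le> j" using le by auto
    show "\<forall>(j, k)\<in>shres J \<pi>. j \<noteq> k \<longrightarrow>
        (\<forall>i\<in>{1..card J}. \<forall>l\<in>{1..card J}. i \<le> j \<and> k \<le> l \<longrightarrow> (i, l) \<in> shres J \<pi>)"
    proof (intro ballI impI allI, clarify)
      fix j k i l assume jk: "(j,k) \<in> shres J \<pi>" "j \<noteq> k" and i: "i \<in> {1..card J}" and l: "l \<in> {1..card J}"
        and ij: "i \<le> j" and kl: "k \<le> l"
      have jk': "j \<in> {1..card J}" "k \<in> {1..card J}" "(decano J j, decano J k) \<in> \<pi>" using mem jk by auto
      have "(decano J i, decano J l) \<in> \<pi>"
      proof (rule NO_ideal[OF pi jk'(3)])
        show "decano J j \<noteq> decano J k" using decano_eq_iff[OF fJ jk'(1,2)] jk(2) by simp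
        show "decano J i \<in> {1..n}" using dJ i by blast
        show "decano J l \<in> {1..n}" using dJ l by blast
        show "decano J i \<le> decano J j" using decano_le[OF fJ i jk'(1)] ij by simp
        show "decano J k \<le> decano J l" using decano_le[OF fJ jk'(2) l] kl by simp
      qed
      then show "(i,l) \<in> shres J \<pi>" using mem i l by auto
    qed
  qed
qed

lemma glue_I: "i \<in> I \<Longrightarrow> j \<in> I \<Longrightarrow> glue n I a b i j = a (cano I i) (cano I j)"
  by (simp add: glue_def)

lemma glue_Ic: "i \<in> {1..n} - I \<Longrightarrow> j \<in> {1..n} - I \<Longrightarrow>
   glue n I a b i j = b (cano ({1..n} - I) i) (cano ({1..n} - I) j)"
  by (simp add: glue_def)

lemma glue_off: assumes "\<not> (i \<in> I \<and> j \<in> I)" "\<not> (i \<in> {1..n} - I \<and> j \<in> {1..n} - I)"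
  shows "glue n I a b i j = 0"
  unfolding glue_def by (simp only: assms if_False)

lemma glue_UT:
  assumes I: "I \<subseteq> {1..n}" and a: "a \<in> UT (card I)" and b: "b \<in> UT (card ({1..n} - I))"
  shows "glue n I a b \<in> UT n"
proof -
  define Ic where "Ic = {1..n} - I"
  have fI: "finite I" using I by (rule finite_sub_n)
  have fIc: "finite Ic" unfolding Ic_def by simp
  show ?thesis unfolding UT_def
  proof (intro CollectI conjI allI impI ballI)
    fix i j assume "i \<notin> {1..n} \<or> j \<notin> {1..n}"
    then show "glue n I a b i j = 0" using I by (intro glue_off) auto
  next
    fix i assume i: "i \<in> {1..n}"
    show "glue n I a b i i = 1"
    proof (cases "i \<in> I")
      case True
      have "glue n I a b i i = a (cano I i) (cano I i)" by (rule glue_I[OF True True])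
      also have "\<dots> = 1" by (rule UT_diag[OF a cano_range[OF fI True]])
      finally show ?thesis .
    next
      case False
      then have "i \<in> Ic" using i Ic_def by simp
      have "glue n I a b i i = b (cano Ic i) (cano Ic i)" using glue_Ic[of i n I i] \<open>i \<in> Ic\<close> Ic_def by simp
      also have "\<dots> = 1" using UT_diag[OF b] cano_range[OF fIc \<open>i \<in> Ic\<close>] Ic_def by simp
      finally show ?thesis .
    qed
  next
    fix i j :: nat assume ji: "j < i"
    show "glue n I a b i j = 0"
    proof (cases "i \<in> I \<and> j \<in> I")
      case True
      then have "cano I j < cano I i" using cano_less[OF fI] ji by blast
      have "glue n I a b i j = a (cano I i) (cano I j)" using True by (intro glue_I) auto
      also have "\<dots> = 0" by (rule UT_low[OF a \<open>cano I j < cano I i\<close>])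
      finally show ?thesis .
    next
      case F1: False
      show ?thesis
      proof (cases "i \<in> Ic \<and> j \<in> Ic")
        case True
        then have "cano Ic j < cano Ic i" using cano_less[OF fIc] ji by blast
        have "glue n I a b i j = b (cano Ic i) (cano Ic j)" using True glue_Ic[of i n I j] Ic_def by simp
        also have "\<dots> = 0" using UT_low[OF b] \<open>cano Ic j < cano Ic i\<close> Ic_def by simp
        finally show ?thesis .
      next
        case False then show ?thesis using F1 glue_off Ic_def by simp
      qed
    qed
  qed
qed

lemma glue_UL:
  assumes I: "I \<subseteq> {1..n}" and a: "a \<in> UT (card I)" and b: "b \<in> UT (card ({1..n} - I))"
  shows "glue n I a b \<in> UL n I"
proof -
  have U: "glue n I a b \<in> UT n" by (rule glue_UT[OF I a b])
  have "spt (msub (glue n I a b) (idm n)) (blk n I)"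
    unfolding spt_def
  proof (intro allI impI)
    fix i j assume nz: "msub (glue n I a b) (idm n) i j \<noteq> 0"
    show "(i,j) \<in> blk n I"
    proof (rule ccontr)
      assume nb: "(i,j) \<notin> blk n I"
      then have 1: "\<not> (i \<in> I \<and> j \<in> I)" "\<not> (i \<in> {1..n} - I \<and> j \<in> {1..n} - I)"
        by (auto simp: blk_def)
      then have "glue n I a b i j = 0" by (rule glue_off)
      moreover have "idm n i j = (0 :: 'a)" using 1 by (auto simp: idm_def)
      ultimately show False using nz by (simp add: msub_def)
    qed
  qed
  then show ?thesis using U by (simp add: UL_iff)
qed

lemma block_pat:
  assumes J: "J \<subseteq> {1..n}" and a: "a \<in> UT (card J)"
  shows "a \<in> UTpat (card J) (shres J \<pi>) \<longleftrightarrow>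
    (\<forall>i\<in>J. \<forall>j\<in>J. a (cano J i) (cano J j) - idm n i j \<noteq> 0 \<longrightarrow> (i,j) \<in> \<pi>)"
proof -
  have fJ: "finite J" using J by (rule finite_sub_n)
  have idmeq: "(idm n i j :: 'a) = idm (card J) (cano J i) (cano J j)" if "i \<in> J" "j \<in> J" for i j
    using that J cano_range[OF fJ] cano_eq_iff[OF fJ that] by (auto simp: idm_def)
  show ?thesis unfolding UTpat_all[OF a]
  proof
    assume H: "\<forall>i j. a i j - idm (card J) i j \<noteq> 0 \<longrightarrow> (i, j) \<in> shres J \<pi>"
    show "\<forall>i\<in>J. \<forall>j\<in>J. a (cano J i) (cano J j) - idm n i j \<noteq> 0 \<longrightarrow> (i,j) \<in> \<pi>"
    proof (intro ballI impI)
      fix i j assume ij: "i \<in> J" "j \<in> J" and nz: "a (cano J i) (cano J j) - idm n i j \<noteq> 0"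
      then have "(cano J i, cano J j) \<in> shres J \<pi>"
        using H[rule_format, of "cano J i" "cano J j"] idmeq[OF ij] by simp
      then show "(i,j) \<in> \<pi>" using shres_mem[OF fJ] decano_cano[OF fJ] ij by simp
    qed
  next
    assume H: "\<forall>i\<in>J. \<forall>j\<in>J. a (cano J i) (cano J j) - idm n i j \<noteq> 0 \<longrightarrow> (i,j) \<in> \<pi>"
    show "\<forall>i j. a i j - idm (card J) i j \<noteq> 0 \<longrightarrow> (i, j) \<in> shres J \<pi>"
    proof (intro allI impI)
      fix i' j' assume nz: "a i' j' - idm (card J) i' j' \<noteq> 0"
      have r: "i' \<in> {1..card J} \<and> j' \<in> {1..card J}"
      proof (rule ccontr)
        assume "\<not> ?thesis"
        then have "a i' j' = 0" "idm (card J) i' j' = (0::'a)" using UT_out[OF a] by (auto simp: idm_def)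
        then show False using nz by simp
      qed
      define i where "i = decano J i'"
      define j where "j = decano J j'"
      have ij: "i \<in> J" "j \<in> J" "cano J i = i'" "cano J j = j'"
        using r decano_in[OF fJ] cano_decano[OF fJ] i_def j_def by auto
      have "(i,j) \<in> \<pi>" using H ij nz idmeq[OF ij(1,2)] by auto
      then show "(i', j') \<in> shres J \<pi>" using shres_mem[OF fJ] r i_def j_def by simp
    qed
  qed
qed

lemma glue_pat:
  assumes I: "I \<subseteq> {1..n}" and a: "a \<in> UT (card I)" and b: "b \<in> UT (card ({1..n} - I))"
  shows "glue n I a b \<in> UTpat n \<pi> \<longleftrightarrow>
    a \<in> UTpat (card I) (shres I \<pi>) \<and> b \<in> UTpat (card ({1..n} - I)) (shres ({1..n} - I) \<pi>)"
proof -
  define Ic where "Ic = {1..n} - I"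
  define g where "g = glue n I a b"
  have gU: "g \<in> UT n" unfolding g_def by (rule glue_UT[OF I a b])
  have gL: "spt (msub g (idm n)) (blk n I)" using glue_UL[OF I a b] by (simp add: UL_iff g_def)
  have "g \<in> UTpat n \<pi> \<longleftrightarrow> (\<forall>i\<in>I. \<forall>j\<in>I. g i j - idm n i j \<noteq> 0 \<longrightarrow> (i,j) \<in> \<pi>)
      \<and> (\<forall>i\<in>Ic. \<forall>j\<in>Ic. g i j - idm n i j \<noteq> 0 \<longrightarrow> (i,j) \<in> \<pi>)"
    unfolding UTpat_all[OF gU]
  proof
    assume "\<forall>i j. g i j - idm n i j \<noteq> 0 \<longrightarrow> (i, j) \<in> \<pi>"
    then show "(\<forall>i\<in>I. \<forall>j\<in>I. g i j - idm n i j \<noteq> 0 \<longrightarrow> (i,j) \<in> \<pi>)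
      \<and> (\<forall>i\<in>Ic. \<forall>j\<in>Ic. g i j - idm n i j \<noteq> 0 \<longrightarrow> (i,j) \<in> \<pi>)" by blast
  next
    assume H: "(\<forall>i\<in>I. \<forall>j\<in>I. g i j - idm n i j \<noteq> 0 \<longrightarrow> (i,j) \<in> \<pi>)
      \<and> (\<forall>i\<in>Ic. \<forall>j\<in>Ic. g i j - idm n i j \<noteq> 0 \<longrightarrow> (i,j) \<in> \<pi>)"
    show "\<forall>i j. g i j - idm n i j \<noteq> 0 \<longrightarrow> (i, j) \<in> \<pi>"
    proof (intro allI impI)
      fix i j assume nz: "g i j - idm n i j \<noteq> 0"
      then have "(i,j) \<in> blk n I" using gL by (simp add: spt_def msub_def)
      then show "(i,j) \<in> \<pi>" using H nz by (auto simp: blk_def Ic_def)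
    qed
  qed
  also have "(\<forall>i\<in>I. \<forall>j\<in>I. g i j - idm n i j \<noteq> 0 \<longrightarrow> (i,j) \<in> \<pi>) \<longleftrightarrow> a \<in> UTpat (card I) (shres I \<pi>)"
  proof -
    have "(\<forall>i\<in>I. \<forall>j\<in>I. g i j - idm n i j \<noteq> 0 \<longrightarrow> (i,j) \<in> \<pi>) \<longleftrightarrow>
      (\<forall>i\<in>I. \<forall>j\<in>I. a (cano I i) (cano I j) - idm n i j \<noteq> 0 \<longrightarrow> (i,j) \<in> \<pi>)"
      by (intro ball_cong refl) (simp add: g_def glue_I)
    then show ?thesis using block_pat[OF I a] by simp
  qed
  also have "(\<forall>i\<in>Ic. \<forall>j\<in>Ic. g i j - idm n i j \<noteq> 0 \<longrightarrow> (i,j) \<in> \<pi>) \<longleftrightarrow> b \<in> UTpat (card Ic) (shres Ic \<pi>)"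
  proof -
    have "(\<forall>i\<in>Ic. \<forall>j\<in>Ic. g i j - idm n i j \<noteq> 0 \<longrightarrow> (i,j) \<in> \<pi>) \<longleftrightarrow>
      (\<forall>i\<in>Ic. \<forall>j\<in>Ic. b (cano Ic i) (cano Ic j) - idm n i j \<noteq> 0 \<longrightarrow> (i,j) \<in> \<pi>)"
      by (intro ball_cong refl) (simp add: g_def glue_Ic Ic_def)
    moreover have "Ic \<subseteq> {1..n}" unfolding Ic_def by blast
    ultimately show ?thesis using block_pat[of Ic n b \<pi>] b unfolding Ic_def by simp
  qed
  finally show ?thesis unfolding g_def Ic_def .
qed

definition Tset :: "nat \<Rightarrow> nat set \<Rightarrow> (nat \<times> nat) set" where
  "Tset n I = {(i,j) \<in> I \<times> ({1..n} - I). i < j}"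

lemma finite_Tset: "finite (Tset n I)"
proof -
  have "Tset n I \<subseteq> {0..n} \<times> {1..n}" unfolding Tset_def by auto
  then show ?thesis by (rule finite_subset) simp
qed

lemma UR_filter:
  assumes I: "I \<subseteq> {1..n}"
  shows "{x \<in> UR n I. spt (msub x (idm n)) P} = (\<lambda>X i j. idm n i j + X i j) ` (MS (Tset n I \<inter> P) :: 'a::field mat set)"
proof (intro set_eqI iffI)
  fix x :: "'a mat" assume x: "x \<in> {x \<in> UR n I. spt (msub x (idm n)) P}"
  then have xU: "x \<in> UT n" and xo: "spt (msub x (idm n)) (off n I)" and xP: "spt (msub x (idm n)) P"
    by (auto simp: UR_iff)
  have xs: "spt (msub x (idm n)) (SU n)" by (rule UT_msub[OF xU])
  have "msub x (idm n) \<in> MS (Tset n I \<inter> P)"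
    using xo xP xs unfolding MS_def spt_def off_def SU_def Tset_def by blast
  moreover have "x = (\<lambda>i j. idm n i j + msub x (idm n) i j)" by (simp add: msub_def)
  ultimately show "x \<in> (\<lambda>X i j. idm n i j + X i j) ` MS (Tset n I \<inter> P)" by blast
next
  fix x :: "'a mat" assume "x \<in> (\<lambda>X i j. idm n i j + X i j) ` MS (Tset n I \<inter> P)"
  then obtain X where X: "X \<in> MS (Tset n I \<inter> P)" and xX: "x = (\<lambda>i j. idm n i j + X i j)" by blast
  have "spt X (SU n)" using X I unfolding MS_def spt_def SU_def Tset_def by fastforce
  then have xU: "x \<in> UT n" unfolding xX by (rule msub_UT)
  have mx: "msub x (idm n) = X" unfolding xX by (simp add: msub_def)
  have "spt X (off n I)" "spt X P" using X unfolding MS_def spt_def off_def Tset_def by auto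
  then show "x \<in> {x \<in> UR n I. spt (msub x (idm n)) P}" using xU mx by (simp add: UR_iff)
qed

lemma card_UR_filter:
  assumes I: "I \<subseteq> {1..n}"
  shows "card {x \<in> (UR n I :: 'a::{finite,field} mat set). spt (msub x (idm n)) P}
     = card (UNIV :: 'a set) ^ card (Tset n I \<inter> P)"
proof -
  have inj: "inj_on (\<lambda>X i j. idm n i j + X i j) (MS (Tset n I \<inter> P) :: 'a mat set)"
    by (rule inj_onI) (simp add: fun_eq_iff)
  have "finite (Tset n I \<inter> P)" using finite_Tset by simp
  then show ?thesis unfolding UR_filter[OF I] card_image[OF inj] by (rule card_MS)
qed

lemma card_UR:
  assumes I: "I \<subseteq> {1..n}"
  shows "card (UR n I :: 'a::{finite,field} mat set) = card (UNIV :: 'a set) ^ card (Tset n I)"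
proof -
  have "{x \<in> (UR n I :: 'a mat set). spt (msub x (idm n)) UNIV} = UR n I" by (simp add: spt_def)
  then show ?thesis using card_UR_filter[OF I, of UNIV, where 'a='a] by simp
qed

lemma asc_Tset: "asc n I \<pi> = card (Tset n I - \<pi>)"
proof -
  have "{(i, j) \<in> I \<times> ({1..n} - I). i < j \<and> (i, j) \<notin> \<pi>} = Tset n I - \<pi>"
    unfolding Tset_def by auto
  then show ?thesis unfolding asc_def by simp
qed

lemma sum_if_card: "finite A \<Longrightarrow> (\<Sum>x\<in>A. if P x then (1::complex) else 0) = of_nat (card {x \<in> A. P x})"
  by (simp add: sum.inter_filter[symmetric])

lemma Defl_glue:
  fixes a b :: "'a::{finite,field} mat"
  assumes pi: "\<pi> \<in> NO n" and I: "I \<subseteq> {1..n}" and a: "a \<in> UT (card I)" and b: "b \<in> UT (n - card I)"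
  shows "Defl n I (Res n I (delta n \<pi>)) (glue n I a b)
    = inverse (of_nat (card (UNIV :: 'a set))) ^ asc n I \<pi>
       * delta (card I) (shres I \<pi>) a * delta (n - card I) (shres ({1..n} - I) \<pi>) b"
proof -
  define g where "g = glue n I a b"
  have b': "b \<in> UT (card ({1..n} - I))" using b card_compl[OF I] by simp
  have gUL: "g \<in> UL n I" unfolding g_def by (rule glue_UL[OF I a b'])
  have gU: "g \<in> UT n" using UL_UT[OF gUL] .
  have gL: "spt (msub g (idm n)) (blk n I)" using gUL by (simp add: UL_iff)
  have iL: "\<And>i k j. i \<in> {1..n} \<Longrightarrow> i \<le> k \<Longrightarrow> (k,j) \<in> \<pi> \<Longrightarrow> k < j \<Longrightarrow> (i,j) \<in> \<pi>"
    using NO_idealL[OF pi] by blast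
  have tm: "Res n I (delta n \<pi>) (mmult n g x)
      = (if g \<in> UTpat n \<pi> \<and> spt (msub x (idm n)) \<pi> then 1 else 0)" if x: "x \<in> UR n I" for x
  proof -
    define X where "X = msub x (idm n)"
    have xU: "x \<in> UT n" using UR_UT[OF x] .
    have Xo: "spt X (off n I)" using x by (simp add: UR_iff X_def)
    have XSU: "spt X (SU n)" unfolding X_def by (rule UT_msub[OF xU])
    have ent: "mmult n g x i j = g i j + mmult n g X i j" for i j
      unfolding X_def by (rule mult_add_entry[OF gU])
    have gXo: "spt (mmult n g X) (off n I)" by (rule ULX[OF gUL Xo])
    have gxU: "mmult n g x \<in> UT n" by (rule mmult_UT[OF gU xU])
    have UP: "mmult n g x \<in> UP n I"
      unfolding UP_def
    proof (intro CollectI conjI gxU ballI, clarify)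
      fix i j assume ij: "i \<in> {1..n}" "i \<notin> I" "j \<in> I"
      have "(i,j) \<notin> blk n I" using ij by (auto simp: blk_def)
      then have 1: "g i j - idm n i j = 0" using gL by (auto simp: spt_def msub_def)
      have "(i,j) \<notin> off n I" using ij by (auto simp: off_def)
      then have 2: "mmult n g X i j = 0" using gXo by (auto simp: spt_def)
      show "mmult n g x i j - idm n i j = 0" using 1 2 ent[of i j] by simp
    qed
    have sptgX: "spt (mmult n g X) \<pi> \<longleftrightarrow> spt X \<pi>"
    proof
      assume "spt (mmult n g X) \<pi>" then show "spt X \<pi>" by (rule left_supp[OF gU XSU _ iL])
    next
      assume "spt X \<pi>" then show "spt (mmult n g X) \<pi>" by (rule fwd_left[OF gU XSU _ iL])
    qed
    have spl: "spt (msub (mmult n g x) (idm n)) \<pi> \<longleftrightarrow> spt (msub g (idm n)) \<pi> \<and> spt (mmult n g X) \<pi>"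
    proof
      assume H: "spt (msub (mmult n g x) (idm n)) \<pi>"
      have "spt (msub g (idm n)) \<pi>" unfolding spt_def
      proof (intro allI impI)
        fix i j assume nz: "msub g (idm n) i j \<noteq> 0"
        then have "(i,j) \<in> blk n I" using gL by (simp add: spt_def)
        then have "(i,j) \<notin> off n I" by (auto simp: blk_def off_def)
        then have "mmult n g X i j = 0" using gXo by (auto simp: spt_def)
        then have "msub (mmult n g x) (idm n) i j \<noteq> 0" using nz ent[of i j] by (simp add: msub_def)
        then show "(i,j) \<in> \<pi>" using H by (simp add: spt_def)
      qed
      moreover have "spt (mmult n g X) \<pi>" unfolding spt_def
      proof (intro allI impI)
        fix i j assume nz: "mmult n g X i j \<noteq> 0"
        then have "(i,j) \<in> off n I" using gXo by (simp add: spt_def)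
        then have "(i,j) \<notin> blk n I" by (auto simp: blk_def off_def)
        then have "msub g (idm n) i j = 0" using gL by (auto simp: spt_def)
        then have "msub (mmult n g x) (idm n) i j \<noteq> 0" using nz ent[of i j] by (simp add: msub_def)
        then show "(i,j) \<in> \<pi>" using H by (simp add: spt_def)
      qed
      ultimately show "spt (msub g (idm n)) \<pi> \<and> spt (mmult n g X) \<pi>" ..
    next
      assume H: "spt (msub g (idm n)) \<pi> \<and> spt (mmult n g X) \<pi>"
      show "spt (msub (mmult n g x) (idm n)) \<pi>" unfolding spt_def
      proof (intro allI impI)
        fix i j assume nz: "msub (mmult n g x) (idm n) i j \<noteq> 0"
        then have "msub g (idm n) i j \<noteq> 0 \<or> mmult n g X i j \<noteq> 0" using ent[of i j] by (auto simp: msub_def)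
        then show "(i,j) \<in> \<pi>" using H by (auto simp: spt_def)
      qed
    qed
    have "mmult n g x \<in> UTpat n \<pi> \<longleftrightarrow> g \<in> UTpat n \<pi> \<and> spt X \<pi>"
      using spl sptgX gxU gU by (auto simp: UTpat_iff)
    then show ?thesis using UP by (simp add: Res_def delta_def X_def)
  qed
  have finUR: "finite (UR n I :: 'a mat set)"
    by (rule finite_subset[OF _ finite_UT[of n]]) (auto simp: UR_iff)
  have "(\<Sum>x\<in>(UR n I :: 'a mat set). Res n I (delta n \<pi>) (mmult n g x))
      = (\<Sum>x\<in>(UR n I :: 'a mat set). if g \<in> UTpat n \<pi> \<and> spt (msub x (idm n)) \<pi> then (1::complex) else 0)"
    by (rule sum.cong) (auto simp: tm)
  also have "\<dots> = of_nat (card {x \<in> (UR n I :: 'a mat set). g \<in> UTpat n \<pi> \<and> spt (msub x (idm n)) \<pi>})"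
    by (rule sum_if_card[OF finUR])
  also have "\<dots> = (if g \<in> UTpat n \<pi> then of_nat (card {x \<in> (UR n I :: 'a mat set). spt (msub x (idm n)) \<pi>}) else 0)"
    by simp
  finally have S: "(\<Sum>x\<in>(UR n I :: 'a mat set). Res n I (delta n \<pi>) (mmult n g x)) =
      (if g \<in> UTpat n \<pi> then of_nat (card {x \<in> (UR n I :: 'a mat set). spt (msub x (idm n)) \<pi>}) else 0)" .
  define q where "q = card (UNIV :: 'a set)"
  have q0: "(of_nat q :: complex) \<noteq> 0" unfolding q_def by simp
  define c1 where "c1 = card (Tset n I \<inter> \<pi>)"
  define c2 where "c2 = card (Tset n I - \<pi>)"
  have cT: "card (Tset n I) = c1 + c2" unfolding c1_def c2_def by (rule card_Int_Diff[OF finite_Tset])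
  have C1: "card {x \<in> (UR n I :: 'a mat set). spt (msub x (idm n)) \<pi>} = q ^ c1"
    unfolding q_def c1_def by (rule card_UR_filter[OF I])
  have C2: "card (UR n I :: 'a mat set) = q ^ (c1 + c2)"
    unfolding q_def cT[symmetric] by (rule card_UR[OF I])
  have ratio: "(of_nat (q ^ c1) :: complex) / of_nat (q ^ (c1 + c2)) = inverse (of_nat q) ^ c2"
    using q0 by (simp add: power_add power_inverse field_simps)
  have gpat: "g \<in> UTpat n \<pi> \<longleftrightarrow> a \<in> UTpat (card I) (shres I \<pi>) \<and> b \<in> UTpat (n - card I) (shres ({1..n} - I) \<pi>)"
    unfolding g_def using glue_pat[OF I a b'] card_compl[OF I] by simp
  show ?thesis
    unfolding g_def[symmetric] Defl_def S C1 C2 asc_Tset c2_def[symmetric] q_def[symmetric]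
    using ratio gpat by (simp add: delta_def)
qed

lemma Delta_delta:
  assumes pi: "\<pi> \<in> NO n"
  shows "Delta n (delta n \<pi> :: 'a::{finite,field} mat \<Rightarrow> complex)
          = (\<lambda>(a, b). \<Sum>I\<in>Pow {1..n}.
               inverse (of_nat (card (UNIV :: 'a set))) ^ asc n I \<pi>
               * delta (card I) (shres I \<pi>) a
               * delta (n - card I) (shres ({1..n} - I) \<pi>) b)"
proof (rule ext, clarify)
  fix a b :: "'a mat"
  show "Delta n (delta n \<pi>) (a, b) = (\<Sum>I\<in>Pow {1..n}.
               inverse (of_nat (card (UNIV :: 'a set))) ^ asc n I \<pi>
               * delta (card I) (shres I \<pi>) a
               * delta (n - card I) (shres ({1..n} - I) \<pi>) b)"
    unfolding Delta_def
  proof (simp only: prod.case, rule sum.cong[OF refl])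
    fix I assume I: "I \<in> Pow {1..n}"
    show "(if a \<in> UT (card I) \<and> b \<in> UT (n - card I)
           then Defl n I (Res n I (delta n \<pi>)) (glue n I a b) else 0) =
          inverse (of_nat (card (UNIV :: 'a set))) ^ asc n I \<pi>
               * delta (card I) (shres I \<pi>) a
               * delta (n - card I) (shres ({1..n} - I) \<pi>) b"
    proof (cases "a \<in> UT (card I) \<and> b \<in> UT (n - card I)")
      case True
      then show ?thesis using Defl_glue[OF pi _ , of I a b] I by simp
    next
      case False
      then show ?thesis by (auto simp: delta_def dest: UTpat_UT)
    qed
  qed
qed

lemma Res_add: "Res n I (\<lambda>x. f x + g x) = (\<lambda>h. Res n I f h + Res n I g h)"
  by (simp add: Res_def fun_eq_iff)
lemma Res_smult: "Res n I (\<lambda>x. c * f x) = (\<lambda>h. c * Res n I f h)"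
  by (simp add: Res_def fun_eq_iff)
lemma Res_zero: "Res n I (\<lambda>x. 0) = (\<lambda>h. 0)"
  by (simp add: Res_def fun_eq_iff)
lemma Defl_add: "Defl n I (\<lambda>x. f x + g x) = (\<lambda>h. Defl n I f h + Defl n I g h)"
  by (simp add: Defl_def fun_eq_iff sum.distrib add_divide_distrib)
lemma Defl_smult: "Defl n I (\<lambda>x. c * f x) = (\<lambda>h. c * Defl n I f h)"
  by (simp add: Defl_def fun_eq_iff sum_distrib_left)
lemma Defl_zero: "Defl n I (\<lambda>x. 0) = (\<lambda>h. 0)"
  by (simp add: Defl_def fun_eq_iff)

lemma Delta_zero: "Delta n ((\<lambda>_. 0) :: 'a::field mat \<Rightarrow> complex) = (\<lambda>_. 0)"
proof (rule ext, clarify)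
  fix a b :: "'a mat"
  have z: "Defl n I (Res n I ((\<lambda>_. 0) :: 'a mat \<Rightarrow> complex)) g = 0" for I g
    unfolding Res_def Defl_def by simp
  show "Delta n ((\<lambda>_. 0) :: 'a::field mat \<Rightarrow> complex) (a, b) = 0"
    unfolding Delta_def by (simp add: z cong: if_cong)
qed

lemma Delta_add: "Delta n (\<lambda>x. f x + g x) = (\<lambda>p. Delta n f p + Delta n g p)"
proof (rule ext, clarify)
  fix a b
  show "Delta n (\<lambda>x. f x + g x) (a, b) = Delta n f (a, b) + Delta n g (a, b)"
    unfolding Delta_def prod.case Res_add Defl_add sum.distrib[symmetric]
    by (rule sum.cong) auto
qed

lemma Delta_smult: "Delta n (\<lambda>x. c * f x) = (\<lambda>p. c * Delta n f p)"
proof (rule ext, clarify)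
  fix a b
  show "Delta n (\<lambda>x. c * f x) (a, b) = c * Delta n f (a, b)"
    unfolding Delta_def prod.case Res_smult Defl_smult sum_distrib_left
    by (rule sum.cong) auto
qed

lemma Delta_scf:
  fixes f :: "'a::{finite,field} mat \<Rightarrow> complex"
  assumes f: "f \<in> scf n"
  shows "Delta n f \<in> cspan {tens u v | u v k. k \<le> n \<and> u \<in> (scf k :: ('a mat \<Rightarrow> complex) set) \<and> v \<in> (scf (n - k) :: ('a mat \<Rightarrow> complex) set)}"
    (is "_ \<in> cspan ?W")
proof -
  have "f \<in> cspan (delta n ` NO n)" using f by (simp add: scf_eq)
  then show ?thesis
  proof (rule cspan_induct[where P="\<lambda>f. Delta n f \<in> cspan ?W"])
    show "Delta n (\<lambda>_. 0) \<in> cspan ?W" unfolding Delta_zero by (rule cspan_zero)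
  next
    fix f1 f2 :: "'a mat \<Rightarrow> complex" assume "Delta n f1 \<in> cspan ?W" "Delta n f2 \<in> cspan ?W"
    then show "Delta n (\<lambda>x. f1 x + f2 x) \<in> cspan ?W" unfolding Delta_add by (rule cspan_add)
  next
    fix c and f1 :: "'a mat \<Rightarrow> complex" assume "Delta n f1 \<in> cspan ?W"
    then show "Delta n (\<lambda>x. c * f1 x) \<in> cspan ?W" unfolding Delta_smult by (rule cspan_smult)
  next
    fix s :: "'a mat \<Rightarrow> complex" assume "s \<in> delta n ` NO n"
    then obtain \<pi> where pi: "\<pi> \<in> NO n" and s: "s = delta n \<pi>" by blast
    define F where "F I = (\<lambda>p. inverse (of_nat (card (UNIV :: 'a set))) ^ asc n I \<pi>
        * tens (delta (card I) (shres I \<pi>) :: 'a mat \<Rightarrow> complex) (delta (n - card I) (shres ({1..n} - I) \<pi>) :: 'a mat \<Rightarrow> complex) p)" for I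
    have eq: "Delta n s = (\<lambda>p. \<Sum>I\<in>Pow {1..n}. F I p)"
      unfolding s Delta_delta[OF pi] F_def tens_def by (rule ext, clarify) (simp add: mult.assoc)
    have "F I \<in> cspan ?W" if I: "I \<in> Pow {1..n}" for I
    proof -
      have Is: "I \<subseteq> {1..n}" using I by simp
      have k: "card I \<le> n" using card_mono[OF _ Is] by simp
      have u: "(delta (card I) (shres I \<pi>) :: 'a mat \<Rightarrow> complex) \<in> scf (card I)"
        unfolding scf_eq using shres_NO[OF pi Is] by (intro cspan_sub) auto
      have "shres ({1..n} - I) \<pi> \<in> NO (card ({1..n} - I))" by (rule shres_NO[OF pi]) auto
      then have v: "(delta (n - card I) (shres ({1..n} - I) \<pi>) :: 'a mat \<Rightarrow> complex) \<in> scf (n - card I)"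
        unfolding scf_eq card_compl[OF Is] by (intro cspan_sub) auto
      have "tens (delta (card I) (shres I \<pi>) :: 'a mat \<Rightarrow> complex) (delta (n - card I) (shres ({1..n} - I) \<pi>) :: 'a mat \<Rightarrow> complex) \<in> ?W"
        using k u v by blast
      then show ?thesis unfolding F_def by (intro cspan_smult[where f="tens _ _"] cspan_sub)
    qed
    then show "Delta n s \<in> cspan ?W" unfolding eq by (intro cspan_sum) auto
  qed
qed

theorem corollary7p6:
  shows "(\<forall>n. (scf n :: ('a::{finite,field} mat \<Rightarrow> complex) set) \<subseteq> cf n)
    \<and> (\<forall>n m f h. f \<in> (scf n :: ('a mat \<Rightarrow> complex) set) \<and> h \<in> scf m \<longrightarrow> mu n m f h \<in> scf (n + m))
    \<and> (\<forall>n f. f \<in> (scf n :: ('a mat \<Rightarrow> complex) set) \<longrightarrow>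
          Delta n f \<in> cspan {tens u v | u v k. k \<le> n \<and> u \<in> scf k \<and> v \<in> scf (n - k)})
    \<and> (\<forall>n. (scf n :: ('a mat \<Rightarrow> complex) set) = cspan (delta n ` NO n))
    \<and> (\<forall>n (c :: (nat \<times> nat) set \<Rightarrow> complex).
          (\<forall>g :: 'a mat. (\<Sum>\<pi>\<in>NO n. c \<pi> * delta n \<pi> g) = 0) \<longrightarrow> (\<forall>\<pi>\<in>NO n. c \<pi> = 0))
    \<and> (\<forall>n m \<pi> \<rho>. \<pi> \<in> NO n \<and> \<rho> \<in> NO m \<longrightarrow>
          mu n m (delta n \<pi>) (delta m \<rho>) = (delta (n + m) (ostar n m \<pi> \<rho>) :: 'a mat \<Rightarrow> complex))
    \<and> (\<forall>n \<pi>. \<pi> \<in> NO n \<longrightarrow>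
          Delta n (delta n \<pi> :: 'a mat \<Rightarrow> complex)
          = (\<lambda>(a, b). \<Sum>I\<in>Pow {1..n}.
               inverse (of_nat (card (UNIV :: 'a set))) ^ asc n I \<pi>
               * delta (card I) (shres I \<pi>) a
               * delta (n - card I) (shres ({1..n} - I) \<pi>) b))"
proof -
  have 1: "\<forall>n. (scf n :: ('a::{finite,field} mat \<Rightarrow> complex) set) \<subseteq> cf n"
    using scf_cf by blast
  have 2: "\<forall>n m f h. f \<in> (scf n :: ('a mat \<Rightarrow> complex) set) \<and> h \<in> scf m \<longrightarrow> mu n m f h \<in> scf (n + m)"
    using mu_scf by blast
  have 3: "\<forall>n f. f \<in> (scf n :: ('a mat \<Rightarrow> complex) set) \<longrightarrow>
          Delta n f \<in> cspan {tens u v | u v k. k \<le> n \<and> u \<in> scf k \<and> v \<in> scf (n - k)}"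
    using Delta_scf by blast
  have 4: "\<forall>n. (scf n :: ('a mat \<Rightarrow> complex) set) = cspan (delta n ` NO n)"
    using scf_eq by blast
  have 5: "\<forall>n (c :: (nat \<times> nat) set \<Rightarrow> complex).
          (\<forall>g :: 'a mat. (\<Sum>\<pi>\<in>NO n. c \<pi> * delta n \<pi> g) = 0) \<longrightarrow> (\<forall>\<pi>\<in>NO n. c \<pi> = 0)"
    using delta_indep by blast
  have 6: "\<forall>n m \<pi> \<rho>. \<pi> \<in> NO n \<and> \<rho> \<in> NO m \<longrightarrow>
          mu n m (delta n \<pi>) (delta m \<rho>) = (delta (n + m) (ostar n m \<pi> \<rho>) :: 'a mat \<Rightarrow> complex)"
    using mu_delta by blast
  have 7: "\<forall>n \<pi>. \<pi> \<in> NO n \<longrightarrow>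
          Delta n (delta n \<pi> :: 'a mat \<Rightarrow> complex)
          = (\<lambda>(a, b). \<Sum>I\<in>Pow {1..n}.
               inverse (of_nat (card (UNIV :: 'a set))) ^ asc n I \<pi>
               * delta (card I) (shres I \<pi>) a
               * delta (n - card I) (shres ({1..n} - I) \<pi>) b)"
    using Delta_delta by blast
  show ?thesis by (intro conjI 1 2 3 4 5 6 7)
qed

end
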